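(* Let $n\in\mathbb{R}^+\cup\{0\}$, $f\in D_{HK}$, and let $F\in C_0$ be the primitive of $f$. Then $$\mathcal{J}_a^{n}f=D(\mathcal{J}_a^{n}F).$$ Consequently, for every $j\in\mathbb{N}$ and $\phi\in\mathcal{D}(a,b)$, $$\langle D^{j}(\mathcal{J}_a^{n}f),\phi\rangle=(-1)^{j+1}\langle\mathcal{J}_a^{n}F,\phi^{(j+1)}\rangle.$$ Moreover, with $m=\lceil n\rceil$, $\mathcal{D}^{n}_af=D^{m+1}\mathcal{J}_a^{m-n}F$. For $0<n<1$, $\mathcal{D}^n_aF$ is a temperate distribution and $\mathcal{D}^n_aF=\mathcal{J}_a^{1-n}f$.
   Context: Fix real numbers $a<b$. $\mathcal{D}(a,b)$ is the space of real $C^\infty$ functions with compact support in $(a,b)$, $\mathcal{D}'(a,b)$ the space of distributions on $(a,b)$, $\langle T,\phi\rangle$ the action of a distribution on a test function (for integrable $T$, $\langle T,\phi\rangle=\int_a^b T\phi$), $D$ the distributional derivative and $D^m$ its $m$-fold iterate. Let $C_0=\{F\in C[a,b]:F(a)=0\}$. A distribution $f\in\mathcal{D}'(a,b)$ is Henstock–Kurzweil integrable if there is $F\in C_0$ with $DF=f$ (such $F$ is unique, the primitive of $f$); its distributional Henstock–Kurzweil integral is $\int_c^d f=F(d)-F(c)$. $D_{HK}$ is the space of these distributions with the Alexiewicz norm $\|f\|_A=\sup_{x\in[a,b]}|F(x)|$; it is a Banach space containing $L^1[a,b]$ as a dense subspace and containing $C[a,b]$. Riemann–Liouville fractional integral on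 $D_{HK}$: for $n\ge 1$, $\mathcal{J}_a^nf(x)=\frac{1}{\Gamma(n)}\int_a^x(x-t)^{n-1}f(t)\,dt$ ($a\le x\le b$); for $0<n<1$, $\mathcal{J}_a^nf(x)=\frac{1}{\Gamma(n)}\lim_{k\to\infty}\int_a^x(x-t)^{n-1}f_k(t)\,dt$ with $(f_k)\subset L^1[a,b]$, $\|f_k-f\|_A\to0$; $\mathcal{J}_a^0=I$. Riemann–Liouville fractional derivative: for $n\ge0$ and $m=\lceil n\rceil$ (least integer $\ge n$), $\mathcal{D}_a^nf=D^m\mathcal{J}_a^{m-n}f\in\mathcal{D}'(a,b)$, $\mathcal{D}_a^0=I$. *)

theory Defs
  imports "HOL-Analysis.Analysis"
begin

text \<open>Distributions on (a,b) are modelled as real functionals on real functions;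
  only their values on test functions matter (equality of distributions = distr_eq).\<close>

type_synonym distr = "(real \<Rightarrow> real) \<Rightarrow> real"

definition smooth_fun :: "(real \<Rightarrow> real) \<Rightarrow> bool" where
  "smooth_fun \<phi> \<longleftrightarrow>
     (\<forall>k x. ((deriv ^^ k) \<phi> has_real_derivative (deriv ^^ Suc k) \<phi> x) (at x))"

definition test_fun :: "real \<Rightarrow> real \<Rightarrow> (real \<Rightarrow> real) \<Rightarrow> bool" where
  "test_fun a b \<phi> \<longleftrightarrow> smooth_fun \<phi> \<and>
     (\<exists>c d. a < c \<and> c \<le> d \<and> d < b \<and> (\<forall>x. x \<notin> {c..d} \<longrightarrow> \<phi> x = 0))"

definition is_distribution :: "real \<Rightarrow> real \<Rightarrow> distr \<Rightarrow> bool" where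
  "is_distribution a b T \<longleftrightarrow>
     (\<forall>\<phi> \<psi> \<alpha> \<beta>. test_fun a b \<phi> \<and> test_fun a b \<psi> \<longrightarrow>
        T (\<lambda>x. \<alpha> * \<phi> x + \<beta> * \<psi> x) = \<alpha> * T \<phi> + \<beta> * T \<psi>) \<and>
     (\<forall>c d. a < c \<and> d < b \<longrightarrow> (\<exists>C N. \<forall>\<phi>. test_fun a b \<phi> \<and> (\<forall>x. x \<notin> {c..d} \<longrightarrow> \<phi> x = 0) \<longrightarrow>
        \<bar>T \<phi>\<bar> \<le> C * (\<Sum>j\<le>N. (SUP x. \<bar>(deriv ^^ j) \<phi> x\<bar>))))"

definition distr_eq :: "real \<Rightarrow> real \<Rightarrow> distr \<Rightarrow> distr \<Rightarrow> bool" where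
  "distr_eq a b S T \<longleftrightarrow> (\<forall>\<phi>. test_fun a b \<phi> \<longrightarrow> S \<phi> = T \<phi>)"

definition regular :: "real \<Rightarrow> real \<Rightarrow> (real \<Rightarrow> real) \<Rightarrow> distr" where
  "regular a b g = (\<lambda>\<phi>. integral {a..b} (\<lambda>x. g x * \<phi> x))"

definition Dd :: "distr \<Rightarrow> distr" where
  "Dd T = (\<lambda>\<phi>. - T (deriv \<phi>))"

definition Dpow :: "nat \<Rightarrow> distr \<Rightarrow> distr" where
  "Dpow m = Dd ^^ m"

definition hk_primitive :: "real \<Rightarrow> real \<Rightarrow> distr \<Rightarrow> (real \<Rightarrow> real) \<Rightarrow> bool" where
  "hk_primitive a b f F \<longleftrightarrow> continuous_on {a..b} F \<and> F a = 0 \<and> distr_eq a b (Dd (regular a b F)) f"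

definition HK_integrable :: "real \<Rightarrow> real \<Rightarrow> distr \<Rightarrow> bool" where
  "HK_integrable a b f \<longleftrightarrow> (\<exists>F. hk_primitive a b f F)"

text \<open>The primitive, normalised to vanish outside [a,b] (so that it is unique).\<close>
definition hk_prim :: "real \<Rightarrow> real \<Rightarrow> distr \<Rightarrow> real \<Rightarrow> real" where
  "hk_prim a b f = (THE F. hk_primitive a b f F \<and> (\<forall>x. x \<notin> {a..b} \<longrightarrow> F x = 0))"

text \<open>Alexiewicz norm, expressed through the primitive.\<close>
definition alex :: "real \<Rightarrow> real \<Rightarrow> (real \<Rightarrow> real) \<Rightarrow> real" where
  "alex a b F = (SUP x\<in>{a..b}. \<bar>F x\<bar>)"

text \<open>Distributional HK integral over [c,d] of f*g, f with primitive P, g absolutely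
  continuous with derivative g' (integration by parts: P g - int P dg).\<close>
definition hk_int_ac :: "(real \<Rightarrow> real) \<Rightarrow> (real \<Rightarrow> real) \<Rightarrow> (real \<Rightarrow> real) \<Rightarrow> real \<Rightarrow> real \<Rightarrow> real" where
  "hk_int_ac P g g' c d = P d * g d - P c * g c - integral {c..d} (\<lambda>t. P t * g' t)"

text \<open>Kernel t \<mapsto> (x-t)^(n-1) on [a,x] (value 0^(n-1) at t = x) and its t-derivative.\<close>
definition kern :: "real \<Rightarrow> real \<Rightarrow> real \<Rightarrow> real" where
  "kern n x t = (if n = 1 then 1 else (x - t) powr (n - 1))"

definition kern' :: "real \<Rightarrow> real \<Rightarrow> real \<Rightarrow> real" where
  "kern' n x t = (if n = 1 then 0 else - (n - 1) * (x - t) powr (n - 2))"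

definition rl_L1 :: "real \<Rightarrow> real \<Rightarrow> (real \<Rightarrow> real) \<Rightarrow> real \<Rightarrow> real" where
  "rl_L1 a n g x = (1 / Gamma n) * integral {a..x} (\<lambda>t. (x - t) powr (n - 1) * g t)"

text \<open>Riemann-Liouville integral of f in D_HK for n >= 1 (a function on [a,b]).\<close>
definition rl_hk :: "real \<Rightarrow> real \<Rightarrow> real \<Rightarrow> distr \<Rightarrow> real \<Rightarrow> real" where
  "rl_hk a b n f x = (1 / Gamma n) * hk_int_ac (hk_prim a b f) (kern n x) (kern' n x) a x"

text \<open>For 0 < n < 1: primitive (in C_0) of the Alexiewicz limit of J^n f_k, f_k in L^1,
  f_k \<rightarrow> f in the Alexiewicz norm.\<close>
definition rl_lt1_prim :: "real \<Rightarrow> real \<Rightarrow> real \<Rightarrow> distr \<Rightarrow> real \<Rightarrow> real" where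
  "rl_lt1_prim a b n f = (THE G. continuous_on {a..b} G \<and> G a = 0 \<and> (\<forall>x. x \<notin> {a..b} \<longrightarrow> G x = 0) \<and>
     (\<forall>fk :: nat \<Rightarrow> real \<Rightarrow> real.
        (\<forall>k. fk k absolutely_integrable_on {a..b}) \<and>
        (\<lambda>k. alex a b (\<lambda>x. integral {a..x} (fk k) - hk_prim a b f x)) \<longlonglongrightarrow> 0
        \<longrightarrow> (\<lambda>k. alex a b (\<lambda>x. integral {a..x} (rl_L1 a n (fk k)) - G x)) \<longlonglongrightarrow> 0))"

definition RL_int :: "real \<Rightarrow> real \<Rightarrow> real \<Rightarrow> distr \<Rightarrow> distr" where
  "RL_int a b n f =
     (if n = 0 then f
      else if n < 1 then Dd (regular a b (rl_lt1_prim a b n f))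
      else regular a b (rl_hk a b n f))"

definition RL_der :: "real \<Rightarrow> real \<Rightarrow> real \<Rightarrow> distr \<Rightarrow> distr" where
  "RL_der a b n f = Dpow (nat \<lceil>n\<rceil>) (RL_int a b (real (nat \<lceil>n\<rceil>) - n) f)"

definition schwartz_fun :: "(real \<Rightarrow> real) \<Rightarrow> bool" where
  "schwartz_fun \<phi> \<longleftrightarrow> smooth_fun \<phi> \<and>
     (\<forall>j k. bounded (range (\<lambda>x. x ^ k * (deriv ^^ j) \<phi> x)))"

definition tempered :: "distr \<Rightarrow> bool" where
  "tempered S \<longleftrightarrow>
     (\<forall>\<phi> \<psi> \<alpha> \<beta>. schwartz_fun \<phi> \<and> schwartz_fun \<psi> \<longrightarrow>
        S (\<lambda>x. \<alpha> * \<phi> x + \<beta> * \<psi> x) = \<alpha> * S \<phi> + \<beta> * S \<psi>) \<and>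
     (\<exists>C N. \<forall>\<phi>. schwartz_fun \<phi> \<longrightarrow>
        \<bar>S \<phi>\<bar> \<le> C * (\<Sum>j\<le>N. \<Sum>k\<le>N. (SUP x. \<bar>x ^ k * (deriv ^^ j) \<phi> x\<bar>)))"

definition temperate_on :: "real \<Rightarrow> real \<Rightarrow> distr \<Rightarrow> bool" where
  "temperate_on a b T \<longleftrightarrow> is_distribution a b T \<and>
     (\<exists>S. tempered S \<and> (\<forall>\<phi>. test_fun a b \<phi> \<longrightarrow> S \<phi> = T \<phi>))"

end

theory Submission
  imports Defs "HOL-Computational_Algebra.Polynomial"
begin


fun Ck :: "nat \<Rightarrow> (real \<Rightarrow> real) \<Rightarrow> bool" where
  "Ck 0 f = True"
| "Ck (Suc k) f = ((\<forall>x. f differentiable at x) \<and> Ck k (deriv f))"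

lemma Ck_mono: "Ck (Suc k) f \<Longrightarrow> Ck k f"
  by (induction k arbitrary: f) auto

lemma Dall: "(\<forall>x. f differentiable at x) \<Longrightarrow> (f has_real_derivative deriv f x) (at x)"
  by (simp add: DERIV_deriv_iff_real_differentiable)

lemma Ck_funpow: "Ck (k + m) f \<Longrightarrow> Ck m ((deriv ^^ k) f)"
  by (induction k arbitrary: f) (auto simp: funpow_Suc_right simp del: funpow.simps)

lemma smooth_fun_Ck: "smooth_fun f \<longleftrightarrow> (\<forall>k. Ck k f)"
proof
  assume s: "smooth_fun f"
  have "smooth_fun g \<Longrightarrow> Ck k g" for k g
  proof (induction k arbitrary: g)
    case (Suc k)
    have "g differentiable at x" for x
      using Suc.prems[unfolded smooth_fun_def, rule_format, of 0 x]
      by (auto simp: real_differentiable_def)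
    moreover have "smooth_fun (deriv g)"
      using Suc.prems unfolding smooth_fun_def
      by (metis funpow_Suc_right o_apply)
    ultimately show ?case using Suc.IH by simp
  qed simp
  then show "\<forall>k. Ck k f" using s by blast
next
  assume c: "\<forall>k. Ck k f"
  show "smooth_fun f" unfolding smooth_fun_def
  proof (intro allI)
    fix k x
    have "Ck (Suc 0) ((deriv ^^ k) f)" using c Ck_funpow[of k "Suc 0" f] by simp
    then have "(deriv ^^ k) f differentiable at x" by simp
    then show "((deriv ^^ k) f has_real_derivative (deriv ^^ Suc k) f x) (at x)"
      by (simp add: DERIV_deriv_iff_real_differentiable)
  qed
qed

lemma Ck_const [simp]: "Ck k (\<lambda>x. c)"
proof (induction k arbitrary: c)
  case (Suc k)
  have "deriv (\<lambda>x. c) = (\<lambda>x. 0)" by (rule ext) simp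
  then show ?case using Suc by simp
qed simp

lemma Ck_id [simp]: "Ck k (\<lambda>x. x)"
proof (cases k)
  case (Suc k')
  have "deriv (\<lambda>x. x) = (\<lambda>x. 1)" by (rule ext) simp
  then show ?thesis using Suc by simp
qed simp

lemma Ck_add:
  "Ck k f \<Longrightarrow> Ck k g \<Longrightarrow> Ck k (\<lambda>x. f x + g x)"
proof (induction k arbitrary: f g)
  case (Suc k)
  have d: "deriv (\<lambda>x. f x + g x) = (\<lambda>x. deriv f x + deriv g x)"
    using Suc.prems by (intro ext DERIV_imp_deriv DERIV_add Dall) auto
  show ?case using Suc by (auto simp: d)
qed simp

lemma Ck_mult:
  "Ck k f \<Longrightarrow> Ck k g \<Longrightarrow> Ck k (\<lambda>x. f x * g x)"
proof (induction k arbitrary: f g)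
  case (Suc k)
  have df: "(f has_real_derivative deriv f x) (at x)" "(g has_real_derivative deriv g x) (at x)" for x
    using Suc.prems by (simp_all add: Dall)
  have "((\<lambda>x. f x * g x) has_real_derivative deriv f x * g x + f x * deriv g x) (at x)" for x
    using DERIV_mult[OF df(1)[of x] df(2)[of x]] by (simp add: algebra_simps)
  then have d: "deriv (\<lambda>x. f x * g x) = (\<lambda>x. deriv f x * g x + f x * deriv g x)"
    by (intro ext DERIV_imp_deriv)
  have "Ck k (\<lambda>x. deriv f x * g x)" using Suc.IH[of "deriv f" g] Suc.prems Ck_mono[of k g] by simp
  moreover have "Ck k (\<lambda>x. f x * deriv g x)" using Suc.IH[of f "deriv g"] Suc.prems Ck_mono[of k f] by simp
  ultimately show ?case using Suc by (auto simp: d intro!: Ck_add)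
qed simp

lemma Ck_comp:
  "Ck k f \<Longrightarrow> Ck k g \<Longrightarrow> Ck k (\<lambda>x. f (g x))"
proof (induction k arbitrary: f g)
  case (Suc k)
  have dd: "((\<lambda>x. f (g x)) has_real_derivative deriv f (g x) * deriv g x) (at x)" for x
  proof -
    have "(f has_real_derivative deriv f (g x)) (at (g x))"
      using Suc.prems by (auto simp: DERIV_deriv_iff_real_differentiable)
    moreover have "(g has_real_derivative deriv g x) (at x)"
      using Suc.prems by (auto simp: DERIV_deriv_iff_real_differentiable)
    ultimately show ?thesis using DERIV_chain2 by blast
  qed
  have d: "deriv (\<lambda>x. f (g x)) = (\<lambda>x. deriv f (g x) * deriv g x)"
    using dd by (intro ext DERIV_imp_deriv)
  have "Ck k (\<lambda>x. deriv f (g x))" using Suc.IH[of "deriv f" g] Suc.prems Ck_mono[of k g] by simp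
  then have "Ck k (\<lambda>x. deriv f (g x) * deriv g x)" using Suc by (auto intro: Ck_mult)
  moreover have "(\<lambda>x. f (g x)) differentiable at x" for x
    using dd by (auto simp: real_differentiable_def)
  ultimately show ?case by (simp add: d)
qed simp

lemma Ck_cmult: "Ck k f \<Longrightarrow> Ck k (\<lambda>x. c * f x)"
  using Ck_mult[of k "\<lambda>x. c" f] by simp

lemma Ck_diff: "Ck k f \<Longrightarrow> Ck k g \<Longrightarrow> Ck k (\<lambda>x. f x - g x)"
  using Ck_add[of k f "\<lambda>x. (-1) * g x"] Ck_cmult[of k g "-1"] by simp

lemma Ck_affine: "Ck k f \<Longrightarrow> Ck k (\<lambda>x. f (c * x + d))"
proof -
  assume f: "Ck k f"
  have "Ck k (\<lambda>x. c * x + d)" by (rule Ck_add[OF Ck_cmult[OF Ck_id] Ck_const])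
  then show ?thesis using Ck_comp[OF f] by blast
qed

definition Pf :: "real poly \<Rightarrow> real \<Rightarrow> real" where
  "Pf p x = (if x \<le> 0 then 0 else poly p (1/x) * exp (-1/x))"

lemma poly_exp_tendsto: "((\<lambda>z. poly (r::real poly) z * exp (-z)) \<longlongrightarrow> 0) at_top"
proof -
  have "((\<lambda>z. \<Sum>i\<le>degree r. coeff r i * (z ^ i / exp z)) \<longlongrightarrow> (\<Sum>i\<le>degree r. coeff r i * 0)) at_top"
    by (intro tendsto_intros tendsto_power_div_exp_0)
  moreover have "poly r z * exp (-z) = (\<Sum>i\<le>degree r. coeff r i * (z ^ i / exp z))" for z
    by (simp add: poly_altdef sum_distrib_right exp_minus divide_inverse mult.assoc)
  ultimately show ?thesis by simp
qed

lemma poly_exp_tendsto0: "((\<lambda>y. poly (r::real poly) (1/y) * exp (-1/y)) \<longlongrightarrow> 0) (at_right 0)"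
proof -
  have "((\<lambda>y. poly r (inverse y) * exp (- inverse y)) \<longlongrightarrow> 0) (at_right 0)"
    using filterlim_compose[OF poly_exp_tendsto[of r] filterlim_inverse_at_top_right] by simp
  then show ?thesis by (simp add: divide_inverse)
qed

definition Pd :: "real poly \<Rightarrow> real poly" where
  "Pd p = [:0,0,1:] * (p - pderiv p)"

lemma Pf_deriv: "(Pf p has_real_derivative Pf (Pd p) x) (at x)"
proof (cases "x = 0")
  case True
  have l: "((\<lambda>y. Pf p y / y) \<longlongrightarrow> 0) (at_left 0)"
  proof (rule Lim_transform_eventually[of "\<lambda>y. 0"])
    show "\<forall>\<^sub>F y in at_left 0. 0 = Pf p y / y"
      by (auto simp: eventually_at_left_field Pf_def intro!: exI[of _ "-1"])
  qed simp
  have r: "((\<lambda>y. Pf p y / y) \<longlongrightarrow> 0) (at_right 0)"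
  proof (rule Lim_transform_eventually[OF poly_exp_tendsto0[of "[:0,1:] * p"]])
    show "\<forall>\<^sub>F y in at_right 0. poly ([:0, 1:] * p) (1 / y) * exp (- 1 / y) = Pf p y / y"
      by (auto simp: eventually_at_right_field Pf_def intro!: exI[of _ 1])
  qed
  have "((\<lambda>y. (Pf p y - Pf p 0) / (y - 0)) \<longlongrightarrow> 0) (at 0)"
    using l r by (simp add: Pf_def filterlim_split_at)
  then show ?thesis using True by (simp add: has_field_derivative_iff Pf_def)
next
  case False
  show ?thesis
  proof (cases "x < 0")
    case True
    have "((\<lambda>y. 0) has_real_derivative Pf (Pd p) x) (at x)" using True by (simp add: Pf_def)
    then show ?thesis
    proof (rule has_field_derivative_transform_within_open[of _ _ _ "{..<0}"])
      show "\<And>y. y \<in> {..<0} \<Longrightarrow> 0 = Pf p y" by (auto simp: Pf_def)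
    qed (use True in \<open>auto simp: Pf_def\<close>)
  next
    case nt: False
    then have xp: "x > 0" using False by auto
    have d1: "((\<lambda>y. 1/y) has_real_derivative -1/x^2) (at x)"
      using xp by (auto intro!: derivative_eq_intros simp: power2_eq_square divide_inverse)
    have d1': "((\<lambda>y. -1/y) has_real_derivative 1/x^2) (at x)"
      using DERIV_minus[OF d1] by simp
    have d2: "((\<lambda>y. poly p (1/y)) has_real_derivative poly (pderiv p) (1/x) * (-1/x^2)) (at x)"
      by (rule DERIV_chain2[OF poly_DERIV d1])
    have d3: "((\<lambda>y. exp (-1/y)) has_real_derivative exp (-1/x) * (1/x^2)) (at x)"
      by (rule DERIV_chain2[OF DERIV_exp d1'])
    have eq: "poly (pderiv p) (1/x) * (- 1 / x^2) * exp (-1/x) + exp (-1/x) * (1/x^2) * poly p (1/x)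
        = Pf (Pd p) x"
    proof -
      have "poly (Pd p) (1/x) = (1/x)^2 * (poly p (1/x) - poly (pderiv p) (1/x))"
        by (simp add: Pd_def power2_eq_square)
      then have "Pf (Pd p) x = (1/x)^2 * (poly p (1/x) - poly (pderiv p) (1/x)) * exp (-1/x)"
        using xp by (simp add: Pf_def)
      then show ?thesis using xp by (simp add: field_simps)
    qed
    have "((\<lambda>y. poly p (1/y) * exp (-1/y)) has_real_derivative Pf (Pd p) x) (at x)"
      by (rule DERIV_cong[OF DERIV_mult[OF d2 d3] eq])
    then show ?thesis
    proof (rule has_field_derivative_transform_within_open[of _ _ _ "{0<..}"])
      show "\<And>y. y \<in> {0<..} \<Longrightarrow> poly p (1/y) * exp (-1/y) = Pf p y" by (auto simp: Pf_def)
    qed (use xp in auto)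
  qed
qed

lemma Ck_Pf: "Ck k (Pf p)"
proof (induction k arbitrary: p)
  case (Suc k)
  have "deriv (Pf p) = Pf (Pd p)" using Pf_deriv by (intro ext DERIV_imp_deriv)
  moreover have "Pf p differentiable at x" for x
    using Pf_deriv by (auto simp: real_differentiable_def)
  ultimately show ?case using Suc by simp
qed simp

definition psi :: "real \<Rightarrow> real" where "psi = Pf 1"

lemma psi_alt: "psi x = (if x \<le> 0 then 0 else exp (-1/x))"
  by (simp add: psi_def Pf_def)

lemma Ck_psi: "Ck k psi" by (simp add: psi_def Ck_Pf)



lemma Ck_continuous: "Ck (Suc k) f \<Longrightarrow> continuous_on S f"
  by (intro continuous_at_imp_continuous_on ballI differentiable_imp_continuous_within) auto

lemma psi_nonneg: "psi x \<ge> 0" by (simp add: psi_alt)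

lemma psi_mono: "0 < s \<Longrightarrow> s \<le> t \<Longrightarrow> psi s \<le> psi t"
  by (auto simp: psi_alt frac_le)

definition beta :: "real \<Rightarrow> real" where "beta t = psi t * psi (1 - t)"

lemma Ck_beta: "Ck k beta"
proof -
  have "Ck k (\<lambda>t. psi (1 - t))"
    using Ck_comp[OF Ck_psi[of k] Ck_diff[OF Ck_const[of k 1] Ck_id[of k]]] by simp
  then show ?thesis unfolding beta_def using Ck_mult[OF Ck_psi] by blast
qed

lemma beta_cont: "continuous_on S beta"
  by (rule Ck_continuous[OF Ck_beta[of "Suc 0"]])

lemma beta_nonneg: "beta t \<ge> 0" by (simp add: beta_def psi_nonneg)

lemma beta_zero: "t \<le> 0 \<or> t \<ge> 1 \<Longrightarrow> beta t = 0"
  by (auto simp: beta_def psi_alt)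

definition c0 :: real where "c0 = integral {0..1} beta"

lemma c0_pos: "c0 > 0"
proof -
  have "psi (1/4) * psi (1/4) \<le> beta t" if "t \<in> {1/4..3/4}" for t
    unfolding beta_def using that
    by (intro mult_mono psi_mono psi_nonneg) auto
  then have "integral {1/4..3/4::real} (\<lambda>t. psi (1/4) * psi (1/4)) \<le> integral {1/4..3/4} beta"
    by (intro integral_le integrable_continuous_interval beta_cont) auto
  also have "\<dots> \<le> integral {0..1} beta"
    by (intro integral_subset_le integrable_continuous_interval beta_cont) (auto simp: beta_nonneg)
  finally have "psi (1/4) * psi (1/4) / 2 \<le> c0" by (simp add: c0_def)
  moreover have "psi (1/4) > 0" by (simp add: psi_alt)
  moreover have "psi (1/4) * psi (1/4) > 0" using calculation(2) by simp
  ultimately show ?thesis by linarith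
qed

definition sstep :: "real \<Rightarrow> real" where "sstep x = integral {-1..x} beta / c0"

lemma sstep_deriv: "(sstep has_real_derivative beta x / c0) (at x)"
proof (cases "x < 0")
  case True
  have z: "sstep y = 0" if "y < 0" for y
  proof -
    have "integral {-1..y} beta = integral {-1..y} (\<lambda>t. 0)"
      using that by (intro Henstock_Kurzweil_Integration.integral_cong beta_zero) auto
    then show ?thesis by (simp add: sstep_def)
  qed
  have "((\<lambda>y. 0) has_real_derivative beta x / c0) (at x)"
    using True beta_zero[of x] by simp
  then show ?thesis
    by (rule has_field_derivative_transform_within_open[of _ _ _ "{..<0}"]) (use True z in auto)
next
  case False
  have "((\<lambda>u. integral {-1..u} beta) has_real_derivative beta x) (at x within {-1..x+1})"
    using False by (intro integral_has_real_derivative beta_cont) auto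
  moreover have "at x within {-1..x+1} = at x"
    using False by (intro at_within_interior) auto
  ultimately have "((\<lambda>u. integral {-1..u} beta) has_real_derivative beta x) (at x)" by simp
  then show ?thesis unfolding sstep_def by (rule DERIV_cdivide)
qed

lemma deriv_sstep: "deriv sstep = (\<lambda>x. (1/c0) * beta x)"
  using sstep_deriv by (intro ext DERIV_imp_deriv) simp

lemma Ck_sstep: "Ck k sstep"
proof (cases k)
  case (Suc k')
  have "sstep differentiable at x" for x
    using sstep_deriv by (auto simp: real_differentiable_def)
  moreover have "Ck k' (\<lambda>x. (1/c0) * beta x)" by (rule Ck_cmult[OF Ck_beta])
  ultimately show ?thesis using Suc by (simp only: deriv_sstep Ck.simps) simp
qed simp

lemma sstep_0: "x \<le> 0 \<Longrightarrow> sstep x = 0"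
proof -
  assume "x \<le> 0"
  then have "integral {-1..x} beta = integral {-1..x} (\<lambda>t. 0)"
    by (intro Henstock_Kurzweil_Integration.integral_cong beta_zero) auto
  then show ?thesis by (simp add: sstep_def)
qed

lemma beta_int_zero: "(\<And>t. t \<in> {u..v} \<Longrightarrow> t \<le> 0 \<or> t \<ge> 1) \<Longrightarrow> integral {u..v} beta = 0"
proof -
  assume h: "\<And>t. t \<in> {u..v} \<Longrightarrow> t \<le> 0 \<or> t \<ge> 1"
  have "integral {u..v} beta = integral {u..v} (\<lambda>t. 0)"
    using h by (intro Henstock_Kurzweil_Integration.integral_cong beta_zero) auto
  then show ?thesis by simp
qed

lemma sstep_1: "x \<ge> 1 \<Longrightarrow> sstep x = 1"
proof -
  assume x: "x \<ge> 1"
  have i: "beta integrable_on {a..b}" for a b by (intro integrable_continuous_interval beta_cont)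
  have "integral {-1..x} beta = integral {-1..0} beta + integral {0..x} beta"
    using x i by (intro Henstock_Kurzweil_Integration.integral_combine[symmetric]) auto
  also have "integral {0..x} beta = integral {0..1} beta + integral {1..x} beta"
    using x i by (intro Henstock_Kurzweil_Integration.integral_combine[symmetric]) auto
  also have "integral {-1..0} beta = 0"
    by (intro beta_int_zero) auto
  also have "integral {1..x} beta = 0"
    by (intro beta_int_zero) auto
  finally show ?thesis using c0_pos by (simp add: sstep_def c0_def)
qed

definition wgt :: "real \<Rightarrow> real \<Rightarrow> real \<Rightarrow> real" where
  "wgt p e y = beta ((y - p) / e) / c0 * (1 / e)"

lemma step_deriv: "((\<lambda>y. sstep ((y - p) / e)) has_real_derivative wgt p e y) (at y)"
proof -
  have "((\<lambda>y. y - p) has_real_derivative 1) (at y)" by (auto intro!: derivative_eq_intros)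
  from DERIV_cdivide[OF this, of e]
  have "((\<lambda>y. (y - p) / e) has_real_derivative 1 / e) (at y)" by simp
  from DERIV_chain2[OF sstep_deriv this] show ?thesis by (simp add: wgt_def)
qed

lemma wgt_nonneg: "e > 0 \<Longrightarrow> wgt p e y \<ge> 0"
  using c0_pos by (simp add: wgt_def beta_nonneg)

lemma wgt_cont: "continuous_on S (wgt p e)"
  using c0_pos by (cases "e = 0")
    (auto simp: wgt_def intro!: continuous_intros continuous_on_compose2[OF beta_cont[of UNIV]])

lemma wgt_zero: "e > 0 \<Longrightarrow> y \<notin> {p<..<p+e} \<Longrightarrow> wgt p e y = 0"
proof -
  assume e: "e > 0" and y: "y \<notin> {p<..<p+e}"
  then have "(y - p) / e \<le> 0 \<or> (y - p) / e \<ge> 1"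
    by (auto simp: field_simps)
  then show ?thesis by (simp add: wgt_def beta_zero)
qed

lemma Ck_step: "e \<noteq> 0 \<Longrightarrow> Ck k (\<lambda>y. sstep ((y - p) / e))"
proof -
  assume e: "e \<noteq> 0"
  have eq: "(\<lambda>y. sstep ((y - p) / e)) = (\<lambda>y. sstep ((1/e) * y + (- p / e)))"
    using e by (intro ext arg_cong[where f=sstep]) (simp add: field_simps)
  show ?thesis unfolding eq by (rule Ck_affine[OF Ck_sstep])
qed

lemma wgt_integral:
  assumes e: "e > 0" and ab: "a \<le> p" "p + e \<le> b"
  shows "integral {a..b} (wgt p e) = 1"
proof -
  have "(wgt p e has_integral (sstep ((b - p) / e) - sstep ((a - p) / e))) {a..b}"
    using ab e
    by (intro fundamental_theorem_of_calculus)
       (auto intro!: DERIV_subset[OF step_deriv] simp: has_real_derivative_iff_has_vector_derivative[symmetric])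
  moreover have "sstep ((b - p) / e) = 1" using ab e by (intro sstep_1) (simp add: field_simps)
  moreover have "sstep ((a - p) / e) = 0" using ab e by (intro sstep_0) (simp add: field_simps)
  ultimately show ?thesis by (simp add: integral_unique)
qed

lemma wgt_approx:
  assumes e: "e > 0" and ab: "a \<le> p" "p + e \<le> b"
    and H: "continuous_on {a..b} H"
    and close: "\<And>y. y \<in> {p..p+e} \<Longrightarrow> \<bar>H y - H p\<bar> \<le> \<eta>"
  shows "\<bar>integral {a..b} (\<lambda>y. H y * wgt p e y) - H p\<bar> \<le> \<eta>"
proof -
  have iw: "wgt p e integrable_on {a..b}" by (intro integrable_continuous_interval wgt_cont)
  have iHw: "(\<lambda>y. (H y - H p) * wgt p e y) integrable_on {a..b}"
    by (intro integrable_continuous_interval continuous_on_mult continuous_on_diff H wgt_cont continuous_on_const)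
  have iHw2: "(\<lambda>y. H y * wgt p e y) integrable_on {a..b}"
    by (intro integrable_continuous_interval continuous_on_mult H wgt_cont)
  have "integral {a..b} (\<lambda>y. H y * wgt p e y) - H p
      = integral {a..b} (\<lambda>y. H y * wgt p e y) - integral {a..b} (\<lambda>y. H p * wgt p e y)"
    using wgt_integral[OF assms(1-3)] by simp
  also have "\<dots> = integral {a..b} (\<lambda>y. (H y - H p) * wgt p e y)"
    using iw iHw2 integrable_on_cmult_left[OF iw, of "H p"]
    by (subst integral_diff[symmetric]) (auto simp: algebra_simps)
  finally have eq: "integral {a..b} (\<lambda>y. H y * wgt p e y) - H p = integral {a..b} (\<lambda>y. (H y - H p) * wgt p e y)" .
  have "norm (integral {a..b} (\<lambda>y. (H y - H p) * wgt p e y)) \<le> integral {a..b} (\<lambda>y. \<eta> * wgt p e y)"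
  proof (rule Henstock_Kurzweil_Integration.integral_norm_bound_integral[OF iHw])
    show "(\<lambda>y. \<eta> * wgt p e y) integrable_on {a..b}" using integrable_on_cmult_left[OF iw, of \<eta>] by simp
    fix y assume "y \<in> {a..b}"
    show "norm ((H y - H p) * wgt p e y) \<le> \<eta> * wgt p e y"
    proof (cases "y \<in> {p<..<p+e}")
      case True
      then have "\<bar>H y - H p\<bar> \<le> \<eta>" using close by auto
      then show ?thesis using wgt_nonneg[OF e, of p y]
        by (simp add: abs_mult mult_right_mono)
    next
      case False
      then show ?thesis using wgt_zero[OF e False] by simp
    qed
  qed
  also have "\<dots> = \<eta>" using wgt_integral[OF assms(1-3)] by simp
  finally show ?thesis using eq by simp
qed

lemma test_fun_smooth: "test_fun a b \<phi> \<Longrightarrow> Ck k \<phi>"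
  by (auto simp: test_fun_def smooth_fun_Ck)

lemma test_fun_deriv_has: "test_fun a b \<phi> \<Longrightarrow> (\<phi> has_real_derivative deriv \<phi> x) (at x)"
  using test_fun_smooth[of a b \<phi> 1] by (simp add: Dall)

lemma test_fun_deriv: "test_fun a b \<phi> \<Longrightarrow> test_fun a b (deriv \<phi>)"
proof -
  assume t: "test_fun a b \<phi>"
  then obtain c d where cd: "a < c" "c \<le> d" "d < b" "\<And>x. x \<notin> {c..d} \<Longrightarrow> \<phi> x = 0"
    by (auto simp: test_fun_def)
  have "\<forall>k. Ck k (deriv \<phi>)"
  proof
    fix k show "Ck k (deriv \<phi>)" using test_fun_smooth[OF t, of "Suc k"] by simp
  qed
  then have s: "smooth_fun (deriv \<phi>)" by (simp add: smooth_fun_Ck)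
  have "deriv \<phi> x = 0" if x: "x \<notin> {c..d}" for x
  proof -
    have "((\<lambda>y. 0) has_real_derivative 0) (at x)" by simp
    then have "(\<phi> has_real_derivative 0) (at x)"
      by (rule has_field_derivative_transform_within_open[of _ _ _ "- {c..d}"]) (use x cd in auto)
    then show ?thesis by (rule DERIV_imp_deriv)
  qed
  then show ?thesis using s cd by (auto simp: test_fun_def)
qed

lemma test_fun_derivs: "test_fun a b \<phi> \<Longrightarrow> test_fun a b ((deriv ^^ k) \<phi>)"
  by (induction k) (auto intro: test_fun_deriv)

lemma test_fun_cont: "test_fun a b \<phi> \<Longrightarrow> continuous_on S \<phi>"
proof -
  assume "test_fun a b \<phi>"
  from Ck_continuous[OF test_fun_smooth[OF this, of "Suc 0"]] show ?thesis .
qed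

lemma test_fun_deriv_cont: "test_fun a b \<phi> \<Longrightarrow> continuous_on S (deriv \<phi>)"
  by (intro test_fun_cont test_fun_deriv)

lemma step_test:
  assumes e: "e > 0" and p: "a < p1" "p1 < p2" "p2 + e < b"
  shows "test_fun a b (\<lambda>y. sstep ((y - p1) / e) - sstep ((y - p2) / e))"
proof -
  have "Ck k (\<lambda>y. sstep ((y - p1) / e) - sstep ((y - p2) / e))" for k
    using e by (intro Ck_diff Ck_step) auto
  then have s: "smooth_fun (\<lambda>y. sstep ((y - p1) / e) - sstep ((y - p2) / e))"
    by (simp add: smooth_fun_Ck)
  have z: "sstep ((y - p1) / e) - sstep ((y - p2) / e) = 0" if "y \<notin> {p1..p2+e}" for y
  proof (cases "y < p1")
    case True
    then show ?thesis using e p by (simp add: sstep_0 divide_nonpos_pos)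
  next
    case False
    then have "y > p2 + e" using that by auto
    then have "(y - p1) / e \<ge> 1" "(y - p2) / e \<ge> 1" using e p by (auto simp: field_simps)
    then show ?thesis by (simp add: sstep_1)
  qed
  show ?thesis unfolding test_fun_def using s z p e
    by (intro conjI exI[of _ p1] exI[of _ "p2+e"]) auto
qed

lemma dubois_interior:
  assumes ab: "a < b" and H: "continuous_on {a..b} H"
    and orth: "\<And>\<phi>. test_fun a b \<phi> \<Longrightarrow> integral {a..b} (\<lambda>x. H x * deriv \<phi> x) = 0"
    and p: "a < p1" "p1 < p2" "p2 < b"
  shows "H p1 = H p2"
proof (rule ccontr)
  assume ne: "H p1 \<noteq> H p2"
  define \<eta> where "\<eta> = \<bar>H p1 - H p2\<bar> / 3"
  have \<eta>: "\<eta> > 0" using ne by (simp add: \<eta>_def)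
  have cont: "\<exists>d>0. \<forall>y\<in>{a..b}. dist y q < d \<longrightarrow> dist (H y) (H q) < \<eta>" if "q \<in> {a..b}" for q
    using H that \<eta> unfolding continuous_on_iff by blast
  obtain d1 where d1: "d1 > 0" "\<And>y. y \<in> {a..b} \<Longrightarrow> dist y p1 < d1 \<Longrightarrow> dist (H y) (H p1) < \<eta>"
    using cont[of p1] p by auto
  obtain d2 where d2: "d2 > 0" "\<And>y. y \<in> {a..b} \<Longrightarrow> dist y p2 < d2 \<Longrightarrow> dist (H y) (H p2) < \<eta>"
    using cont[of p2] p by auto
  define e where "e = min (min d1 d2) (min (p2 - p1) (b - p2)) / 2"
  have e: "e > 0" "e < d1" "e < d2" "e < p2 - p1" "e < b - p2"
    using d1 d2 p by (auto simp: e_def)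
  define \<phi> where "\<phi> = (\<lambda>y. sstep ((y - p1) / e) - sstep ((y - p2) / e))"
  have t: "test_fun a b \<phi>" unfolding \<phi>_def using e p by (intro step_test) auto
  have "(\<phi> has_real_derivative wgt p1 e y - wgt p2 e y) (at y)" for y
    unfolding \<phi>_def by (intro DERIV_diff step_deriv)
  then have dphi: "deriv \<phi> = (\<lambda>y. wgt p1 e y - wgt p2 e y)" by (intro ext DERIV_imp_deriv)
  have i1: "(\<lambda>y. H y * wgt p1 e y) integrable_on {a..b}"
    by (intro integrable_continuous_interval continuous_on_mult H wgt_cont)
  have i2: "(\<lambda>y. H y * wgt p2 e y) integrable_on {a..b}"
    by (intro integrable_continuous_interval continuous_on_mult H wgt_cont)
  have "0 = integral {a..b} (\<lambda>x. H x * deriv \<phi> x)" using orth[OF t] by simp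
  also have "\<dots> = integral {a..b} (\<lambda>y. H y * wgt p1 e y) - integral {a..b} (\<lambda>y. H y * wgt p2 e y)"
    unfolding dphi using i1 i2 by (subst integral_diff[symmetric]) (auto simp: algebra_simps)
  finally have eq: "integral {a..b} (\<lambda>y. H y * wgt p1 e y) = integral {a..b} (\<lambda>y. H y * wgt p2 e y)" by simp
  have A1: "\<bar>integral {a..b} (\<lambda>y. H y * wgt p1 e y) - H p1\<bar> \<le> \<eta>"
  proof (rule wgt_approx[OF e(1) _ _ H])
    fix y assume "y \<in> {p1..p1+e}"
    then show "\<bar>H y - H p1\<bar> \<le> \<eta>" using d1(2)[of y] e p by (auto simp: dist_real_def)
  qed (use e p in auto)
  have A2: "\<bar>integral {a..b} (\<lambda>y. H y * wgt p2 e y) - H p2\<bar> \<le> \<eta>"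
  proof (rule wgt_approx[OF e(1) _ _ H])
    fix y assume "y \<in> {p2..p2+e}"
    then show "\<bar>H y - H p2\<bar> \<le> \<eta>" using d2(2)[of y] e p by (auto simp: dist_real_def)
  qed (use e p in auto)
  from A1 A2 eq have "\<bar>H p1 - H p2\<bar> \<le> 2 * \<eta>" by linarith
  then show False using \<eta> by (simp add: \<eta>_def)
qed

lemma dubois:
  assumes ab: "a < b" and H: "continuous_on {a..b} H"
    and orth: "\<And>\<phi>. test_fun a b \<phi> \<Longrightarrow> integral {a..b} (\<lambda>x. H x * deriv \<phi> x) = 0"
    and x: "x \<in> {a..b}"
  shows "H x = H a"
proof -
  define m where "m = (a + b) / 2"
  have m: "a < m" "m < b" using ab by (auto simp: m_def)
  have c: "H y = H m" if "y \<in> {a<..<b}" for y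
  proof -
    consider "y < m" | "y = m" | "y > m" by linarith
    then show ?thesis
    proof cases
      case 1 then show ?thesis using dubois_interior[OF ab H orth, of y m] that m by auto
    next
      case 3 then show ?thesis using dubois_interior[OF ab H orth, of m y] that m by auto
    qed simp
  qed
  have cl: "continuous_on (closure {a<..<b}) H" using H ab by simp
  have "H x = H m" using continuous_constant_on_closure[OF cl c] x ab by auto
  moreover have "H a = H m" using continuous_constant_on_closure[OF cl c] ab by auto
  ultimately show ?thesis by simp
qed

lemma hk_primitive_unique:
  assumes ab: "a < b" and F1: "hk_primitive a b f F1" and F2: "hk_primitive a b f F2"
    and x: "x \<in> {a..b}"
  shows "F1 x = F2 x"
proof -
  have c1: "continuous_on {a..b} F1" and c2: "continuous_on {a..b} F2"
    using F1 F2 by (auto simp: hk_primitive_def)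
  have H: "continuous_on {a..b} (\<lambda>x. F1 x - F2 x)" using c1 c2 by (intro continuous_on_diff)
  have orth: "integral {a..b} (\<lambda>x. (F1 x - F2 x) * deriv \<phi> x) = 0" if t: "test_fun a b \<phi>" for \<phi>
  proof -
    have e1: "- integral {a..b} (\<lambda>x. F1 x * deriv \<phi> x) = f \<phi>"
      using F1 t by (auto simp: hk_primitive_def distr_eq_def Dd_def regular_def)
    have e2: "- integral {a..b} (\<lambda>x. F2 x * deriv \<phi> x) = f \<phi>"
      using F2 t by (auto simp: hk_primitive_def distr_eq_def Dd_def regular_def)
    have i1: "(\<lambda>x. F1 x * deriv \<phi> x) integrable_on {a..b}"
      by (intro integrable_continuous_interval continuous_on_mult c1 test_fun_deriv_cont[OF t])
    have i2: "(\<lambda>x. F2 x * deriv \<phi> x) integrable_on {a..b}"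
      by (intro integrable_continuous_interval continuous_on_mult c2 test_fun_deriv_cont[OF t])
    have "integral {a..b} (\<lambda>x. (F1 x - F2 x) * deriv \<phi> x)
        = integral {a..b} (\<lambda>x. F1 x * deriv \<phi> x) - integral {a..b} (\<lambda>x. F2 x * deriv \<phi> x)"
      using i1 i2 by (subst integral_diff[symmetric]) (auto simp: algebra_simps)
    then show ?thesis using e1 e2 by simp
  qed
  have "F1 x - F2 x = F1 a - F2 a" using dubois[OF ab H orth x] by simp
  then show ?thesis using F1 F2 by (simp add: hk_primitive_def)
qed

lemma hk_prim_char:
  assumes ab: "a < b" and F: "hk_primitive a b f F"
  shows "hk_primitive a b f (hk_prim a b f)"
    "\<And>x. x \<in> {a..b} \<Longrightarrow> hk_prim a b f x = F x"
    "\<And>x. x \<notin> {a..b} \<Longrightarrow> hk_prim a b f x = 0"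
proof -
  define F0 where "F0 = (\<lambda>x. if x \<in> {a..b} then F x else 0)"
  have reg: "regular a b F0 = regular a b F"
    unfolding regular_def F0_def by (intro ext integral_cong) auto
  have P0: "hk_primitive a b f F0"
    using F ab unfolding hk_primitive_def reg
    by (auto simp: F0_def intro: continuous_on_cong[THEN iffD1])
  have ex: "\<exists>!G. hk_primitive a b f G \<and> (\<forall>x. x \<notin> {a..b} \<longrightarrow> G x = 0)"
  proof (rule ex1I[of _ F0])
    show "hk_primitive a b f F0 \<and> (\<forall>x. x \<notin> {a..b} \<longrightarrow> F0 x = 0)" using P0 by (simp add: F0_def)
    fix G assume G: "hk_primitive a b f G \<and> (\<forall>x. x \<notin> {a..b} \<longrightarrow> G x = 0)"
    show "G = F0"
    proof
      fix x show "G x = F0 x"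
        using hk_primitive_unique[OF ab _ P0, of G x] G by (cases "x \<in> {a..b}") (auto simp: F0_def)
    qed
  qed
  have th: "hk_primitive a b f (hk_prim a b f) \<and> (\<forall>x. x \<notin> {a..b} \<longrightarrow> hk_prim a b f x = 0)"
    unfolding hk_prim_def by (rule theI'[OF ex])
  then show "hk_primitive a b f (hk_prim a b f)" by simp
  show "\<And>x. x \<notin> {a..b} \<Longrightarrow> hk_prim a b f x = 0" using th by simp
  show "\<And>x. x \<in> {a..b} \<Longrightarrow> hk_prim a b f x = F x"
    using hk_primitive_unique[OF ab th[THEN conjunct1] F] by simp
qed



lemma arch2: "\<exists>n::nat. -real n \<le> x \<and> x \<le> real n"
proof -
  obtain n :: nat where "\<bar>x\<bar> \<le> real n" using real_arch_simple by blast
  then show ?thesis by (intro exI[of _ n]) auto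
qed

lemma sf_leb: "sigma_finite_measure (lebesgue :: real measure)"
  unfolding sigma_finite_measure_def
proof (intro exI[of _ "range (\<lambda>n::nat. {-real n..real n})"] conjI)
  show "countable (range (\<lambda>n::nat. {-real n..real n}))" by simp
qed (auto intro: arch2)

lemma psf: "pair_sigma_finite (lebesgue :: real measure) (lebesgue :: real measure)"
  unfolding pair_sigma_finite_def using sf_leb by simp

lemma meas_fst[measurable]: "fst \<in> borel_measurable (lebesgue \<Otimes>\<^sub>M lebesgue)"
  using measurable_compose[OF measurable_fst id_borel_measurable_lebesgue] by (simp add: id_def)
lemma meas_snd[measurable]: "snd \<in> borel_measurable (lebesgue \<Otimes>\<^sub>M (lebesgue::real measure))"
  using measurable_compose[OF measurable_snd id_borel_measurable_lebesgue] by (simp add: id_def)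

lemma meas_ind: "(\<lambda>(t,s). indicator {t..x} s :: real) \<in> borel_measurable (lebesgue \<Otimes>\<^sub>M (lebesgue::real measure))"
proof -
  have "(\<lambda>(t,s). indicator {t..x} s :: real) = (\<lambda>p. if fst p \<le> snd p \<and> snd p \<le> (x::real) then 1 else (0::real))"
    by (auto simp: fun_eq_iff indicator_def)
  then show ?thesis by simp
qed

lemma ITER:
  fixes \<Psi> :: "real \<Rightarrow> real \<Rightarrow> real" and lo hi :: "real \<Rightarrow> real"
  assumes gi: "integrable (lebesgue \<Otimes>\<^sub>M lebesgue) (\<lambda>(u,v). indicator {a..x} u * (indicator {lo u..hi u} v * \<Psi> u v))"
  shows "(\<integral>u. (\<integral>v. indicator {a..x} u * (indicator {lo u..hi u} v * \<Psi> u v) \<partial>lebesgue) \<partial>lebesgue)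
          = integral {a..x} (\<lambda>u. integral {lo u..hi u} (\<Psi> u))"
    "(\<lambda>u. integral {lo u..hi u} (\<Psi> u)) absolutely_integrable_on {a..x}"
proof -
  interpret P: pair_sigma_finite "lebesgue :: real measure" "lebesgue :: real measure" by (rule psf)
  define g where "g = (\<lambda>(u,v). indicator {a..x} u * (indicator {lo u..hi u} v * \<Psi> u v) :: real)"
  have gi': "integrable (lebesgue \<Otimes>\<^sub>M lebesgue) g" using gi by (simp add: g_def)
  define G where "G u = (\<integral>v. g (u,v) \<partial>lebesgue)" for u
  have Gi: "integrable lebesgue G" unfolding G_def by (rule P.integrable_fst'[OF gi'])
  have "AE u in lebesgue. integrable lebesgue (\<lambda>v. g (u,v))" by (rule P.AE_integrable_fst'[OF gi'])
  then obtain N where N: "\<And>u. u \<in> space lebesgue - N \<Longrightarrow> integrable lebesgue (\<lambda>v. g (u,v))"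
    "N \<in> null_sets lebesgue"
    by (rule AE_E3) blast
  have negN: "negligible N" using N(2) by (simp add: negligible_iff_null_sets)
  have Gu: "G u = integral {lo u..hi u} (\<Psi> u)" if u: "u \<in> {a..x}" "u \<notin> N" for u
  proof -
    have eq: "(\<lambda>v. g (u,v)) = (\<lambda>v. indicator {lo u..hi u} v *\<^sub>R \<Psi> u v)"
      using u(1) by (auto simp: g_def fun_eq_iff)
    have "set_integrable lebesgue {lo u..hi u} (\<Psi> u)"
      unfolding set_integrable_def using N(1)[of u] u eq by simp
    then have "(LINT v:{lo u..hi u}|lebesgue. \<Psi> u v) = integral {lo u..hi u} (\<Psi> u)"
      by (rule set_lebesgue_integral_eq_integral)
    then show ?thesis by (simp add: G_def eq set_lebesgue_integral_def)
  qed
  have G0: "G u = 0" if "u \<notin> {a..x}" for u using that by (simp add: G_def g_def)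
  have GS: "set_integrable lebesgue {a..x} G"
    unfolding set_integrable_def by (rule integrable_mult_indicator[OF _ Gi]) auto
  have "(\<integral>u. G u \<partial>lebesgue) = (LINT u:{a..x}|lebesgue. G u)"
    unfolding set_lebesgue_integral_def
  proof (intro Bochner_Integration.integral_cong refl)
    fix u show "G u = indicator {a..x} u *\<^sub>R G u" using G0[of u] by (cases "u \<in> {a..x}") auto
  qed
  also have "\<dots> = integral {a..x} G" by (rule set_lebesgue_integral_eq_integral(2)[OF GS])
  also have "\<dots> = integral {a..x} (\<lambda>u. integral {lo u..hi u} (\<Psi> u))"
    by (rule integral_spike[OF negN]) (auto simp: Gu)
  finally show "(\<integral>u. (\<integral>v. indicator {a..x} u * (indicator {lo u..hi u} v * \<Psi> u v) \<partial>lebesgue) \<partial>lebesgue)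
          = integral {a..x} (\<lambda>u. integral {lo u..hi u} (\<Psi> u))"
    by (simp add: G_def g_def)
  show "(\<lambda>u. integral {lo u..hi u} (\<Psi> u)) absolutely_integrable_on {a..x}"
    by (rule absolutely_integrable_spike[OF GS negN]) (auto simp: Gu)
qed

lemma TRI:
  fixes \<Phi> :: "real \<Rightarrow> real \<Rightarrow> real"
  assumes fi: "integrable (lebesgue \<Otimes>\<^sub>M lebesgue) (\<lambda>(t,s). indicator {a..x} t * (indicator {t..x} s * \<Phi> s t))"
  shows "integral {a..x} (\<lambda>s. integral {a..s} (\<lambda>t. \<Phi> s t)) = integral {a..x} (\<lambda>t. integral {t..x} (\<lambda>s. \<Phi> s t))"
    and "(\<lambda>s. integral {a..s} (\<lambda>t. \<Phi> s t)) absolutely_integrable_on {a..x}"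
    and "(\<lambda>t. integral {t..x} (\<lambda>s. \<Phi> s t)) absolutely_integrable_on {a..x}"
proof -
  interpret P: pair_sigma_finite "lebesgue :: real measure" "lebesgue :: real measure" by (rule psf)
  have I1: "(\<integral>t. (\<integral>s. indicator {a..x} t * (indicator {t..x} s * \<Phi> s t) \<partial>lebesgue) \<partial>lebesgue)
          = integral {a..x} (\<lambda>t. integral {t..x} (\<lambda>s. \<Phi> s t))"
    "(\<lambda>t. integral {t..x} (\<lambda>s. \<Phi> s t)) absolutely_integrable_on {a..x}"
    using ITER[of a x "\<lambda>u. u" "\<lambda>u. x" "\<lambda>u v. \<Phi> v u"] fi by auto
  have sw: "integrable (lebesgue \<Otimes>\<^sub>M lebesgue) (\<lambda>(s,t). indicator {a..x} t * (indicator {t..x} s * \<Phi> s t))"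
    using P.integrable_product_swap[OF fi] by (simp add: case_prod_beta')
  have eqf: "(\<lambda>(s,t). indicator {a..x} t * (indicator {t..x} s * \<Phi> s t))
      = (\<lambda>(s,t). indicator {a..x} s * (indicator {a..s} t * \<Phi> s t) :: real)"
    by (auto simp: fun_eq_iff indicator_def)
  have I2: "(\<integral>s. (\<integral>t. indicator {a..x} s * (indicator {a..s} t * \<Phi> s t) \<partial>lebesgue) \<partial>lebesgue)
          = integral {a..x} (\<lambda>s. integral {a..s} (\<lambda>t. \<Phi> s t))"
    "(\<lambda>s. integral {a..s} (\<lambda>t. \<Phi> s t)) absolutely_integrable_on {a..x}"
    using ITER[of a x "\<lambda>u. a" "\<lambda>u. u" "\<lambda>u v. \<Phi> u v"] sw eqf by auto
  have F: "(\<integral>s. (\<integral>t. indicator {a..x} t * (indicator {t..x} s * \<Phi> s t) \<partial>lebesgue) \<partial>lebesgue)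
     = (\<integral>t. (\<integral>s. indicator {a..x} t * (indicator {t..x} s * \<Phi> s t) \<partial>lebesgue) \<partial>lebesgue)"
    using P.Fubini_integral[of "\<lambda>t s. indicator {a..x} t * (indicator {t..x} s * \<Phi> s t)"] fi by simp
  have eq2: "\<And>s t. indicator {a..x} t * (indicator {t..x} s * \<Phi> s t) = indicator {a..x} s * (indicator {a..s} t * \<Phi> s t :: real)"
    by (auto simp: indicator_def)
  show "integral {a..x} (\<lambda>s. integral {a..s} (\<lambda>t. \<Phi> s t)) = integral {a..x} (\<lambda>t. integral {t..x} (\<lambda>s. \<Phi> s t))"
    using F I1(1) I2(1) by (simp only: eq2)
  show "(\<lambda>s. integral {a..s} (\<lambda>t. \<Phi> s t)) absolutely_integrable_on {a..x}" by (rule I2(2))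
  show "(\<lambda>t. integral {t..x} (\<lambda>s. \<Phi> s t)) absolutely_integrable_on {a..x}" by (rule I1(2))
qed

lemma PI:
  fixes k :: "real \<Rightarrow> real \<Rightarrow> real" and h :: "real \<Rightarrow> real"
  assumes km: "(\<lambda>(t,s). k t s) \<in> borel_measurable (lebesgue \<Otimes>\<^sub>M lebesgue)"
    and h: "h absolutely_integrable_on {a..x}"
    and ki: "\<And>t. t \<in> {a..x} \<Longrightarrow> (k t) absolutely_integrable_on {t..x}"
    and kb: "\<And>t. t \<in> {a..x} \<Longrightarrow> (LINT s:{t..x}|lebesgue. \<bar>k t s\<bar>) \<le> C"
  shows "integrable (lebesgue \<Otimes>\<^sub>M lebesgue) (\<lambda>(t,s). indicator {a..x} t * (indicator {t..x} s * (k t s * h t)))"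
proof -
  interpret P: pair_sigma_finite "lebesgue :: real measure" "lebesgue :: real measure" by (rule psf)
  define H where "H t = indicator {a..x} t * h t" for t
  have Hi: "integrable lebesgue H" using h by (simp add: set_integrable_def H_def[abs_def])
  have Hm: "H \<in> borel_measurable lebesgue" using Hi by auto
  define Fn where "Fn = (\<lambda>(t,s). H t * (indicator {t..x} s * k t s) :: real)"
  have eq: "(\<lambda>(t,s). indicator {a..x} t * (indicator {t..x} s * (k t s * h t))) = Fn"
    by (auto simp: H_def Fn_def fun_eq_iff)
  have eq2: "Fn = (\<lambda>p. H (fst p) * ((\<lambda>(t,s). indicator {t..x} s :: real) p * (\<lambda>(t,s). k t s) p))"
    by (auto simp: Fn_def fun_eq_iff)
  have meas: "Fn \<in> borel_measurable (lebesgue \<Otimes>\<^sub>M lebesgue)"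
    unfolding eq2 by (intro borel_measurable_times measurable_compose[OF measurable_fst Hm] meas_ind km)
  have measn: "(\<lambda>p. norm (Fn p)) \<in> borel_measurable (lebesgue \<Otimes>\<^sub>M lebesgue)"
    using meas by measurable
  have m2: "(\<lambda>t. \<integral>s. norm (Fn (t,s)) \<partial>lebesgue) \<in> borel_measurable lebesgue"
    by (rule sigma_finite_measure.borel_measurable_lebesgue_integral[OF sf_leb]) (use measn in simp)
  have Fts: "Fn (t,s) = H t * (indicator {t..x} s * k t s)" for t s by (simp add: Fn_def)
  show ?thesis unfolding eq
  proof (rule P.Fubini_integrable[OF meas])
    show "integrable lebesgue (\<lambda>t. \<integral>s. norm (Fn (t,s)) \<partial>lebesgue)"
    proof (rule Bochner_Integration.integrable_bound[OF _ m2])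
      show "integrable lebesgue (\<lambda>t. C * \<bar>H t\<bar>)" using Hi by auto
      show "AE t in lebesgue. norm (\<integral>s. norm (Fn (t,s)) \<partial>lebesgue) \<le> norm (C * \<bar>H t\<bar>)"
      proof (rule AE_I2)
        fix t :: real
        have e1: "(\<integral>s. norm (Fn (t,s)) \<partial>lebesgue) = \<bar>H t\<bar> * (LINT s:{t..x}|lebesgue. \<bar>k t s\<bar>)"
          unfolding set_lebesgue_integral_def Fts
          by (subst integral_mult_right_zero[symmetric]) (auto simp: abs_mult indicator_def intro!: Bochner_Integration.integral_cong)
        have nn: "0 \<le> (LINT s:{t..x}|lebesgue. \<bar>k t s\<bar>)"
          unfolding set_lebesgue_integral_def by (intro integral_nonneg_AE) (auto simp: indicator_def)
        show "norm (\<integral>s. norm (Fn (t,s)) \<partial>lebesgue) \<le> norm (C * \<bar>H t\<bar>)"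
        proof (cases "t \<in> {a..x}")
          case True
          have h1: "\<bar>H t\<bar> * (LINT s:{t..x}|lebesgue. \<bar>k t s\<bar>) \<le> \<bar>H t\<bar> * C"
            using kb[OF True] by (intro mult_left_mono) auto
          have h2: "\<bar>H t\<bar> * C \<le> \<bar>H t\<bar> * \<bar>C\<bar>" by (intro mult_left_mono) auto
          have "\<bar>H t\<bar> * (LINT s:{t..x}|lebesgue. \<bar>k t s\<bar>) \<le> \<bar>C\<bar> * \<bar>H t\<bar>"
            using h1 h2 by (simp add: mult.commute)
          then show ?thesis unfolding e1 using nn by (simp add: abs_mult)
        next
          case False
          then show ?thesis unfolding e1 by (simp add: H_def)
        qed
      qed
    qed
    show "AE t in lebesgue. integrable lebesgue (\<lambda>s. Fn (t,s))"
    proof (rule AE_I2)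
      fix t :: real
      show "integrable lebesgue (\<lambda>s. Fn (t,s))"
      proof (cases "t \<in> {a..x}")
        case True
        have "integrable lebesgue (\<lambda>s. indicator {t..x} s *\<^sub>R k t s)"
          using ki[OF True] by (simp add: set_integrable_def)
        then show ?thesis unfolding Fts by simp
      next
        case False
        then show ?thesis unfolding Fts by (simp add: H_def)
      qed
    qed
  qed
qed

lemma KER1:
  fixes \<alpha> t x :: real
  assumes \<alpha>: "\<alpha> > 0" and tx: "t \<le> x"
  shows "((\<lambda>s. (s - t) powr (\<alpha> - 1)) has_integral ((x - t) powr \<alpha> / \<alpha>)) {t..x}"
proof -
  define F where "F = (\<lambda>s. (s - t) powr \<alpha> / \<alpha>)"
  have "((\<lambda>s. (s - t) powr (\<alpha> - 1)) has_integral (F x - F t)) {t..x}"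
  proof (rule fundamental_theorem_of_calculus_interior[of t x F])
    show "t \<le> x" by (rule tx)
    show "continuous_on {t..x} F"
      unfolding F_def using \<alpha> by (intro continuous_on_divide continuous_on_powr' continuous_intros) auto
    fix s assume s: "s \<in> {t<..<x}"
    have "(F has_real_derivative (\<alpha> * (s - t) powr (\<alpha> - 1) * 1) / \<alpha>) (at s)"
      unfolding F_def using s \<alpha> by (intro derivative_eq_intros) auto
    then show "(F has_vector_derivative (s - t) powr (\<alpha> - 1)) (at s)"
      using \<alpha> by (simp add: has_real_derivative_iff_has_vector_derivative[symmetric])
  qed
  then show ?thesis using \<alpha> by (simp add: F_def)
qed

lemma KER2:
  fixes \<alpha> t x :: real
  assumes \<alpha>: "\<alpha> > 0" and tx: "t \<le> x"
  shows "((\<lambda>s. (x - s) powr (\<alpha> - 1)) has_integral ((x - t) powr \<alpha> / \<alpha>)) {t..x}"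
proof -
  define F where "F = (\<lambda>s. (x - s) powr \<alpha> / \<alpha> * (-1))"
  have "((\<lambda>s. (x - s) powr (\<alpha> - 1)) has_integral (F x - F t)) {t..x}"
  proof (rule fundamental_theorem_of_calculus_interior[of t x F])
    show "t \<le> x" by (rule tx)
    show "continuous_on {t..x} F"
      unfolding F_def using \<alpha> by (intro continuous_on_mult continuous_on_divide continuous_on_powr' continuous_intros) auto
    fix s assume s: "s \<in> {t<..<x}"
    have "(F has_real_derivative (\<alpha> * (x - s) powr (\<alpha> - 1) * (0 - 1)) / \<alpha> * (-1)) (at s)"
      unfolding F_def using s \<alpha> by (intro derivative_eq_intros) auto
    then show "(F has_vector_derivative (x - s) powr (\<alpha> - 1)) (at s)"
      using \<alpha> by (simp add: has_real_derivative_iff_has_vector_derivative[symmetric])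
  qed
  then show ?thesis using \<alpha> by (simp add: F_def)
qed

lemma LINT_eq_integral_nonneg:
  fixes f :: "real \<Rightarrow> real" and t x :: real
  assumes "(f has_integral I) {t..x}" "\<And>s. s \<in> {t..x} \<Longrightarrow> f s \<ge> 0"
  shows "f absolutely_integrable_on {t..x}" "(LINT s:{t..x}|lebesgue. \<bar>f s\<bar>) = I"
proof -
  show ai: "f absolutely_integrable_on {t..x}"
    using assms(2) by (intro nonnegative_absolutely_integrable_1) (use assms(1) in \<open>auto simp: integrable_on_def\<close>)
  have "(LINT s:{t..x}|lebesgue. \<bar>f s\<bar>) = (LINT s:{t..x}|lebesgue. f s)"
    unfolding set_lebesgue_integral_def using assms(2)
    by (intro Bochner_Integration.integral_cong) (auto simp: indicator_def)
  also have "\<dots> = integral {t..x} f" by (rule set_lebesgue_integral_eq_integral(2)[OF ai])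
  also have "\<dots> = I" using assms(1) by (simp add: integral_unique)
  finally show "(LINT s:{t..x}|lebesgue. \<bar>f s\<bar>) = I" .
qed



definition KI :: "real \<Rightarrow> real \<Rightarrow> (real \<Rightarrow> real) \<Rightarrow> real \<Rightarrow> real" where
  "KI a \<alpha> h x = integral {a..x} (\<lambda>t. (x - t) powr (\<alpha> - 1) * h t)"

lemma ker1_facts:
  fixes \<alpha> a t x :: real
  assumes "\<alpha> > 0" "a \<le> t" "t \<le> x"
  shows "(\<lambda>s. (s - t) powr (\<alpha> - 1)) absolutely_integrable_on {t..x}"
    "(LINT s:{t..x}|lebesgue. \<bar>(s - t) powr (\<alpha> - 1)\<bar>) \<le> (x - a) powr \<alpha> / \<alpha>"
proof -
  note L = LINT_eq_integral_nonneg[OF KER1[OF assms(1,3)]]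
  show "(\<lambda>s. (s - t) powr (\<alpha> - 1)) absolutely_integrable_on {t..x}" using L by simp
  have "(x - t) powr \<alpha> \<le> (x - a) powr \<alpha>" using assms by (intro powr_mono2) auto
  then show "(LINT s:{t..x}|lebesgue. \<bar>(s - t) powr (\<alpha> - 1)\<bar>) \<le> (x - a) powr \<alpha> / \<alpha>"
    using L assms by (simp add: divide_right_mono)
qed

lemma ker2_facts:
  fixes \<alpha> a t x :: real
  assumes "\<alpha> > 0" "a \<le> t" "t \<le> x"
  shows "(\<lambda>s. (x - s) powr (\<alpha> - 1)) absolutely_integrable_on {t..x}"
    "(LINT s:{t..x}|lebesgue. \<bar>(x - s) powr (\<alpha> - 1)\<bar>) \<le> (x - a) powr \<alpha> / \<alpha>"
proof -
  note L = LINT_eq_integral_nonneg[OF KER2[OF assms(1,3)]]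
  show "(\<lambda>s. (x - s) powr (\<alpha> - 1)) absolutely_integrable_on {t..x}" using L by simp
  have "(x - t) powr \<alpha> \<le> (x - a) powr \<alpha>" using assms by (intro powr_mono2) auto
  then show "(LINT s:{t..x}|lebesgue. \<bar>(x - s) powr (\<alpha> - 1)\<bar>) \<le> (x - a) powr \<alpha> / \<alpha>"
    using L assms by (simp add: divide_right_mono)
qed

lemma FubA1:
  fixes h :: "real \<Rightarrow> real" and \<alpha> a x :: real
  assumes \<alpha>: "\<alpha> > 0" and ax: "a \<le> x" and h: "h absolutely_integrable_on {a..x}"
  shows "integral {a..x} (KI a \<alpha> h) = integral {a..x} (\<lambda>t. (x - t) powr \<alpha> / \<alpha> * h t)"
    "KI a \<alpha> h absolutely_integrable_on {a..x}"
proof -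
  have km: "(\<lambda>(t,s). (s - t) powr (\<alpha> - 1)) \<in> borel_measurable (lebesgue \<Otimes>\<^sub>M (lebesgue :: real measure))"
  proof -
    have "(\<lambda>(t,s). (s - t) powr (\<alpha> - 1)) = (\<lambda>p::real\<times>real. (snd p - fst p) powr (\<alpha> - 1))" by auto
    then show ?thesis by simp
  qed
  have int: "integrable (lebesgue \<Otimes>\<^sub>M lebesgue)
      (\<lambda>(t,s). indicator {a..x} t * (indicator {t..x} s * ((s - t) powr (\<alpha> - 1) * h t)))"
    by (rule PI[OF km h, where C="(x - a) powr \<alpha> / \<alpha>"]) (use ker1_facts[OF \<alpha>] in auto)
  note T = TRI[of a x "\<lambda>s t. (s - t) powr (\<alpha> - 1) * h t", OF int]
  have KIe: "KI a \<alpha> h = (\<lambda>s. integral {a..s} (\<lambda>t. (s - t) powr (\<alpha> - 1) * h t))"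
    by (simp add: KI_def[abs_def])
  have inner: "integral {t..x} (\<lambda>s. (s - t) powr (\<alpha> - 1) * h t) = (x - t) powr \<alpha> / \<alpha> * h t"
    if "t \<in> {a..x}" for t
    using integral_unique[OF KER1[OF \<alpha>, of t x]] that by simp
  show "integral {a..x} (KI a \<alpha> h) = integral {a..x} (\<lambda>t. (x - t) powr \<alpha> / \<alpha> * h t)"
    unfolding KIe T(1) using inner by (intro Henstock_Kurzweil_Integration.integral_cong) auto
  show "KI a \<alpha> h absolutely_integrable_on {a..x}" unfolding KIe by (rule T(2))
qed

lemma FubA2:
  fixes h :: "real \<Rightarrow> real" and \<alpha> a x :: real
  assumes \<alpha>: "\<alpha> > 0" and ax: "a \<le> x" and h: "h absolutely_integrable_on {a..x}"
  shows "integral {a..x} (\<lambda>s. (x - s) powr (\<alpha> - 1) * integral {a..s} h) = integral {a..x} (\<lambda>t. (x - t) powr \<alpha> / \<alpha> * h t)"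
proof -
  have km: "(\<lambda>(t,s). (x - s) powr (\<alpha> - 1)) \<in> borel_measurable (lebesgue \<Otimes>\<^sub>M (lebesgue :: real measure))"
  proof -
    have "(\<lambda>(t,s). (x - s) powr (\<alpha> - 1)) = (\<lambda>p::real\<times>real. (x - snd p) powr (\<alpha> - 1))" by auto
    then show ?thesis by simp
  qed
  have int: "integrable (lebesgue \<Otimes>\<^sub>M lebesgue)
      (\<lambda>(t,s). indicator {a..x} t * (indicator {t..x} s * ((x - s) powr (\<alpha> - 1) * h t)))"
    by (rule PI[OF km h, where C="(x - a) powr \<alpha> / \<alpha>"]) (use ker2_facts[OF \<alpha>] in auto)
  note T = TRI[of a x "\<lambda>s t. (x - s) powr (\<alpha> - 1) * h t", OF int]
  have inner: "integral {t..x} (\<lambda>s. (x - s) powr (\<alpha> - 1) * h t) = (x - t) powr \<alpha> / \<alpha> * h t"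
    if "t \<in> {a..x}" for t
    using integral_unique[OF KER2[OF \<alpha>, of t x]] that by simp
  have "integral {a..x} (\<lambda>s. (x - s) powr (\<alpha> - 1) * integral {a..s} h)
      = integral {a..x} (\<lambda>s. integral {a..s} (\<lambda>t. (x - s) powr (\<alpha> - 1) * h t))" by simp
  also have "\<dots> = integral {a..x} (\<lambda>t. integral {t..x} (\<lambda>s. (x - s) powr (\<alpha> - 1) * h t))" by (rule T(1))
  also have "\<dots> = integral {a..x} (\<lambda>t. (x - t) powr \<alpha> / \<alpha> * h t)"
    using inner by (intro Henstock_Kurzweil_Integration.integral_cong) auto
  finally show ?thesis .
qed

lemma LemA:
  fixes h :: "real \<Rightarrow> real" and \<alpha> a x :: real
  assumes \<alpha>: "\<alpha> > 0" and ax: "a \<le> x" and h: "h absolutely_integrable_on {a..x}"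
  shows "KI a \<alpha> (\<lambda>s. integral {a..s} h) x = integral {a..x} (KI a \<alpha> h)"
  using FubA1(1)[OF assms] FubA2[OF assms] by (simp add: KI_def)

lemma LINT_bound:
  fixes f :: "real \<Rightarrow> real"
  assumes f: "continuous_on {t..x} f" and tx: "t \<le> x" and M: "\<And>s. s \<in> {t..x} \<Longrightarrow> \<bar>f s\<bar> \<le> M"
  shows "(LINT s:{t..x}|lebesgue. \<bar>f s\<bar>) \<le> M * (x - t)"
proof -
  have ai: "(\<lambda>s. \<bar>f s\<bar>) absolutely_integrable_on {t..x}"
    by (intro absolutely_integrable_continuous_real continuous_on_rabs f)
  have "(LINT s:{t..x}|lebesgue. \<bar>f s\<bar>) = integral {t..x} (\<lambda>s. \<bar>f s\<bar>)"
    by (rule set_lebesgue_integral_eq_integral(2)[OF ai])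
  also have "\<dots> \<le> integral {t..x} (\<lambda>s. M)"
    using M ai by (intro integral_le) (auto simp: set_lebesgue_integral_eq_integral(1))
  also have "\<dots> = M * (x - t)" using tx by simp
  finally show ?thesis .
qed

lemma IBP:
  fixes u \<psi> \<psi>' :: "real \<Rightarrow> real" and a b :: real
  assumes ab: "a \<le> b" and u: "u absolutely_integrable_on {a..b}"
    and d: "\<And>y. (\<psi> has_real_derivative \<psi>' y) (at y)" and c: "continuous_on UNIV \<psi>'"
    and \<psi>b: "\<psi> b = 0"
  shows "integral {a..b} (\<lambda>y. integral {a..y} u * \<psi>' y) = - integral {a..b} (\<lambda>s. u s * \<psi> s)"
proof -
  have "compact (\<psi>' ` {a..b})" by (intro compact_continuous_image continuous_on_subset[OF c]) auto
  then obtain M where M: "\<And>y. y \<in> {a..b} \<Longrightarrow> \<bar>\<psi>' y\<bar> \<le> M"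
    by (metis compact_imp_bounded bounded_real imageI)
  have km: "(\<lambda>(t::real,s). \<psi>' s) \<in> borel_measurable (lebesgue \<Otimes>\<^sub>M (lebesgue :: real measure))"
  proof -
    have e: "(\<lambda>(t::real,s). \<psi>' s) = (\<lambda>p::real\<times>real. \<psi>' (snd p))" by auto
    show ?thesis unfolding e by (rule measurable_compose[OF meas_snd borel_measurable_continuous_onI[OF c]])
  qed
  have int: "integrable (lebesgue \<Otimes>\<^sub>M lebesgue)
      (\<lambda>(t,s). indicator {a..b} t * (indicator {t..b} s * (\<psi>' s * u t)))"
  proof (rule PI[OF km u, where C="M * (b - a)"])
    fix t assume t: "t \<in> {a..b}"
    show "\<psi>' absolutely_integrable_on {t..b}"
      by (intro absolutely_integrable_continuous_real continuous_on_subset[OF c]) auto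
    have "(LINT s:{t..b}|lebesgue. \<bar>\<psi>' s\<bar>) \<le> M * (b - t)"
      using t M by (intro LINT_bound continuous_on_subset[OF c]) auto
    also have "\<dots> \<le> M * (b - a)"
    proof -
      have "0 \<le> M" using M[of a] ab by auto
      then show ?thesis using t by (intro mult_left_mono) auto
    qed
    finally show "(LINT s:{t..b}|lebesgue. \<bar>\<psi>' s\<bar>) \<le> M * (b - a)" .
  qed
  note T = TRI[of a b "\<lambda>s t. \<psi>' s * u t", OF int]
  have ftc: "integral {t..b} \<psi>' = \<psi> b - \<psi> t" if "t \<le> b" for t
  proof -
    have "(\<psi>' has_integral (\<psi> b - \<psi> t)) {t..b}"
      using that by (intro fundamental_theorem_of_calculus)
        (auto intro!: DERIV_subset[OF d] simp: has_real_derivative_iff_has_vector_derivative[symmetric])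
    then show ?thesis by (rule integral_unique)
  qed
  have "integral {a..b} (\<lambda>y. integral {a..y} u * \<psi>' y) = integral {a..b} (\<lambda>s. integral {a..s} (\<lambda>t. \<psi>' s * u t))"
    by (simp add: mult.commute)
  also have "\<dots> = integral {a..b} (\<lambda>t. integral {t..b} (\<lambda>s. \<psi>' s * u t))" by (rule T(1))
  also have "\<dots> = integral {a..b} (\<lambda>t. - (u t * \<psi> t))"
    using ftc \<psi>b by (intro Henstock_Kurzweil_Integration.integral_cong) (auto simp: algebra_simps)
  also have "\<dots> = - integral {a..b} (\<lambda>s. u s * \<psi> s)" by simp
  finally show ?thesis .
qed

lemma kernel_prod_ai:
  fixes g :: "real \<Rightarrow> real" and \<alpha> a x :: real
  assumes \<alpha>: "\<alpha> > 0" and ax: "a \<le> x" and g: "continuous_on {a..x} g"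
  shows "(\<lambda>t. (x - t) powr (\<alpha> - 1) * g t) absolutely_integrable_on {a..x}"
proof -
  have k: "(\<lambda>t. (x - t) powr (\<alpha> - 1)) absolutely_integrable_on {a..x}"
    using ker2_facts(1)[OF \<alpha> order_refl ax] .
  have "bounded (g ` {a..x})" by (intro compact_imp_bounded compact_continuous_image g) auto
  from absolutely_integrable_bounded_measurable_product_real[OF
      continuous_imp_measurable_on_sets_lebesgue[OF g] _ this k]
  show ?thesis by (simp add: mult.commute)
qed

lemma boundB:
  fixes g :: "real \<Rightarrow> real" and \<alpha> a x M :: real
  assumes \<alpha>: "\<alpha> > 0" and ax: "a \<le> x" and g: "continuous_on {a..x} g"
    and M: "\<And>t. t \<in> {a..x} \<Longrightarrow> \<bar>g t\<bar> \<le> M"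
  shows "\<bar>KI a \<alpha> g x\<bar> \<le> M * ((x - a) powr \<alpha> / \<alpha>)"
proof -
  have ai: "(\<lambda>t. (x - t) powr (\<alpha> - 1) * g t) absolutely_integrable_on {a..x}"
    by (rule kernel_prod_ai[OF \<alpha> ax g])
  have ki: "((\<lambda>t. (x - t) powr (\<alpha> - 1)) has_integral (x - a) powr \<alpha> / \<alpha>) {a..x}"
    by (rule KER2[OF \<alpha> ax])
  have "norm (KI a \<alpha> g x) \<le> integral {a..x} (\<lambda>t. M * (x - t) powr (\<alpha> - 1))"
    unfolding KI_def
  proof (rule Henstock_Kurzweil_Integration.integral_norm_bound_integral)
    show "(\<lambda>t. (x - t) powr (\<alpha> - 1) * g t) integrable_on {a..x}"
      using ai by (simp add: set_lebesgue_integral_eq_integral(1))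
    show "(\<lambda>t. M * (x - t) powr (\<alpha> - 1)) integrable_on {a..x}"
      using ki by (intro integrable_on_mult_right) (auto simp: integrable_on_def)
    fix t assume t: "t \<in> {a..x}"
    have "\<bar>(x - t) powr (\<alpha> - 1)\<bar> * \<bar>g t\<bar> \<le> (x - t) powr (\<alpha> - 1) * M"
      using M[OF t] by (intro mult_mono) auto
    then show "norm ((x - t) powr (\<alpha> - 1) * g t) \<le> M * (x - t) powr (\<alpha> - 1)"
      by (simp add: abs_mult mult.commute)
  qed
  also have "\<dots> = M * ((x - a) powr \<alpha> / \<alpha>)" using integral_unique[OF ki] by simp
  finally show ?thesis by simp
qed

lemma KI_diff:
  fixes g1 g2 :: "real \<Rightarrow> real" and \<alpha> a x :: real
  assumes \<alpha>: "\<alpha> > 0" and ax: "a \<le> x" and g1: "continuous_on {a..x} g1" and g2: "continuous_on {a..x} g2"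
  shows "KI a \<alpha> (\<lambda>t. g1 t - g2 t) x = KI a \<alpha> g1 x - KI a \<alpha> g2 x"
proof -
  have i1: "(\<lambda>t. (x - t) powr (\<alpha> - 1) * g1 t) integrable_on {a..x}"
    using kernel_prod_ai[OF \<alpha> ax g1] by (simp add: set_lebesgue_integral_eq_integral(1))
  have i2: "(\<lambda>t. (x - t) powr (\<alpha> - 1) * g2 t) integrable_on {a..x}"
    using kernel_prod_ai[OF \<alpha> ax g2] by (simp add: set_lebesgue_integral_eq_integral(1))
  show ?thesis unfolding KI_def
    using integral_diff[OF i1 i2] by (simp add: algebra_simps)
qed

lemma KI_cong:
  "(\<And>t. t \<in> {a..x} \<Longrightarrow> g1 t = g2 t) \<Longrightarrow> KI a \<alpha> g1 x = KI a \<alpha> g2 x"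
  unfolding KI_def by (intro Henstock_Kurzweil_Integration.integral_cong) auto

lemma KI_const:
  fixes \<alpha> a x c :: real
  assumes \<alpha>: "\<alpha> > 0" and ax: "a \<le> x"
  shows "KI a \<alpha> (\<lambda>t. c) x = c * ((x - a) powr \<alpha> / \<alpha>)"
  using integral_unique[OF KER2[OF \<alpha> ax]] unfolding KI_def by simp

lemma weierstrass_seq:
  fixes Q :: "real \<Rightarrow> real" and a b :: real
  assumes Q: "continuous_on {a..b} Q"
  shows "\<exists>p q. \<forall>k. (\<forall>x. (p k has_real_derivative q k x) (at x)) \<and> continuous_on UNIV (q k)
      \<and> (\<forall>x\<in>{a..b}. \<bar>Q x - p k x\<bar> \<le> 1 / Suc k)"
proof -
  have "\<exists>pq. (\<forall>x. (fst pq has_real_derivative snd pq x) (at x)) \<and> continuous_on UNIV (snd pq)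
      \<and> (\<forall>x\<in>{a..b}. \<bar>Q x - fst pq x\<bar> \<le> 1 / Suc k)" for k
  proof -
    obtain g where g: "polynomial_function g" "\<forall>x\<in>{a..b}. norm (Q x - g x) < 1 / Suc k"
      using Stone_Weierstrass_polynomial_function[OF compact_Icc Q, of "1 / Suc k"] by auto
    have "real_polynomial_function g" using g(1) by (simp add: real_polynomial_function_eq)
    then obtain g' where g': "real_polynomial_function g'" "\<And>x. (g has_real_derivative g' x) (at x)"
      using has_real_derivative_polynomial_function by blast
    have "continuous_on UNIV g'"
      using g'(1) by (intro continuous_on_polymonial_function) (simp add: real_polynomial_function_eq)
    then show ?thesis using g g'
      by (intro exI[of _ "(g, g')"]) (auto simp: less_imp_le)
  qed
  then obtain pq where "\<forall>k. (\<forall>x. (fst (pq k) has_real_derivative snd (pq k) x) (at x)) \<and> continuous_on UNIV (snd (pq k))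
      \<and> (\<forall>x\<in>{a..b}. \<bar>Q x - fst (pq k) x\<bar> \<le> 1 / Suc k)"
    by metis
  then show ?thesis by (intro exI[of _ "\<lambda>k. fst (pq k)"] exI[of _ "\<lambda>k. snd (pq k)"]) auto
qed

lemma ftc_int:
  fixes p q :: "real \<Rightarrow> real"
  assumes d: "\<And>x. (p has_real_derivative q x) (at x)" and ax: "a \<le> x"
  shows "integral {a..x} q = p x - p a"
proof -
  have "(q has_integral (p x - p a)) {a..x}"
    using ax by (intro fundamental_theorem_of_calculus)
      (auto intro!: DERIV_subset[OF d] simp: has_real_derivative_iff_has_vector_derivative[symmetric])
  then show ?thesis by (rule integral_unique)
qed

lemma KI_cont:
  fixes Q :: "real \<Rightarrow> real" and \<alpha> a b :: real
  assumes \<alpha>: "\<alpha> > 0" and ab: "a \<le> b" and Q: "continuous_on {a..b} Q"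
  shows "continuous_on {a..b} (KI a \<alpha> Q)"
proof -
  obtain p q where pq: "\<And>k x. (p k has_real_derivative q k x) (at x)" "\<And>k. continuous_on UNIV (q k)"
      "\<And>k x. x \<in> {a..b} \<Longrightarrow> \<bar>Q x - p k x\<bar> \<le> 1 / Suc k"
    using weierstrass_seq[OF Q] by metis
  have pc: "continuous_on S (p k)" for k S
    using pq(1) by (intro continuous_at_imp_continuous_on ballI DERIV_isCont) blast
  have Wc: "continuous_on {a..b} (KI a \<alpha> (p k))" for k
  proof -
    have eq: "KI a \<alpha> (p k) x = p k a * ((x - a) powr \<alpha> / \<alpha>) + integral {a..x} (KI a \<alpha> (q k))"
      if x: "x \<in> {a..b}" for x
    proof -
      have ax: "a \<le> x" using x by auto
      have "KI a \<alpha> (p k) x = KI a \<alpha> (\<lambda>t. p k a + integral {a..t} (q k)) x"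
        using ftc_int[OF pq(1)] by (intro KI_cong) auto
      also have "\<dots> = KI a \<alpha> (\<lambda>t. p k a) x + KI a \<alpha> (\<lambda>t. integral {a..t} (q k)) x"
      proof -
        have c1: "continuous_on {a..x} (\<lambda>t. integral {a..t} (q k))"
          by (intro indefinite_integral_continuous_1 integrable_continuous_interval continuous_on_subset[OF pq(2)]) auto
        have "KI a \<alpha> (\<lambda>t. p k a) x = KI a \<alpha> (\<lambda>t. (p k a + integral {a..t} (q k)) - integral {a..t} (q k)) x"
          by simp
        also have "\<dots> = KI a \<alpha> (\<lambda>t. p k a + integral {a..t} (q k)) x - KI a \<alpha> (\<lambda>t. integral {a..t} (q k)) x"
          by (intro KI_diff[OF \<alpha> ax] continuous_on_add continuous_on_const c1)
        finally show ?thesis by simp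
      qed
      also have "\<dots> = p k a * ((x - a) powr \<alpha> / \<alpha>) + integral {a..x} (KI a \<alpha> (q k))"
        using KI_const[OF \<alpha> ax] LemA[OF \<alpha> ax, of "q k"]
          absolutely_integrable_continuous_real[OF continuous_on_subset[OF pq(2)]] by auto
      finally show ?thesis .
    qed
    have ai: "KI a \<alpha> (q k) absolutely_integrable_on {a..b}"
      by (rule FubA1(2)[OF \<alpha> ab absolutely_integrable_continuous_real[OF continuous_on_subset[OF pq(2)]]]) auto
    have "continuous_on {a..b} (\<lambda>x. p k a * ((x - a) powr \<alpha> / \<alpha>) + integral {a..x} (KI a \<alpha> (q k)))"
      using \<alpha> ai
      by (intro continuous_on_add continuous_on_mult continuous_on_const continuous_on_divide
            continuous_on_powr' continuous_intros indefinite_integral_continuous_1)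
         (auto simp: set_lebesgue_integral_eq_integral(1))
    then show ?thesis by (rule continuous_on_eq) (use eq in auto)
  qed
  have ul: "uniform_limit {a..b} (\<lambda>k. KI a \<alpha> (p k)) (KI a \<alpha> Q) sequentially"
    unfolding uniform_limit_sequentially_iff
  proof (intro allI impI)
    fix e :: real assume e: "e > 0"
    define C where "C = (b - a) powr \<alpha> / \<alpha>"
    have C: "C \<ge> 0" using \<alpha> by (simp add: C_def)
    obtain N :: nat where N: "(C + 1) / e < N" using reals_Archimedean2 by blast
    have "\<forall>k\<ge>N. \<forall>x\<in>{a..b}. dist (KI a \<alpha> (p k) x) (KI a \<alpha> Q x) < e"
    proof (intro allI impI ballI)
      fix k x assume k: "N \<le> k" and x: "x \<in> {a..b}"
      have ax: "a \<le> x" using x by auto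
      have "KI a \<alpha> Q x - KI a \<alpha> (p k) x = KI a \<alpha> (\<lambda>t. Q t - p k t) x"
        using continuous_on_subset[OF Q, of "{a..x}"] x
        by (intro KI_diff[OF \<alpha> ax, symmetric] pc) auto
      moreover have "\<bar>KI a \<alpha> (\<lambda>t. Q t - p k t) x\<bar> \<le> 1 / Suc k * ((x - a) powr \<alpha> / \<alpha>)"
        using continuous_on_subset[OF Q, of "{a..x}"] x pq(3)
        by (intro boundB[OF \<alpha> ax] continuous_on_diff pc) auto
      moreover have "(x - a) powr \<alpha> / \<alpha> \<le> C"
        unfolding C_def using x \<alpha> by (intro divide_right_mono powr_mono2) auto
      ultimately have "\<bar>KI a \<alpha> Q x - KI a \<alpha> (p k) x\<bar> \<le> 1 / Suc k * C"
        by (smt (verit) divide_nonneg_nonneg of_nat_0_le_iff mult_left_mono)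
      also have "\<dots> < e"
      proof -
        have "C + 1 < e * N" using N e by (simp add: field_simps)
        also have "\<dots> \<le> e * Suc k" using k e by simp
        finally have "C < e * Suc k" by simp
        then show ?thesis by (simp add: field_simps)
      qed
      finally show "dist (KI a \<alpha> (p k) x) (KI a \<alpha> Q x) < e" by (simp add: dist_real_def abs_minus_commute)
    qed
    then show "\<exists>N. \<forall>k\<ge>N. \<forall>x\<in>{a..b}. dist (KI a \<alpha> (p k) x) (KI a \<alpha> Q x) < e" by blast
  qed
  show ?thesis by (rule uniform_limit_theorem[OF _ ul]) (auto simp: Wc)
qed



lemma KI_at_a: "KI a \<alpha> h a = 0"
proof -
  have "((\<lambda>t. (a - t) powr (\<alpha> - 1) * h t) has_integral 0) {a..a}"
    by (rule has_integral_null_real) simp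
  then show ?thesis unfolding KI_def by (rule integral_unique)
qed

lemma Gamma_rec: "z > 0 \<Longrightarrow> Gamma (z + 1) = z * Gamma (z::real)"
  by (rule Gamma_plus1) (auto dest: nonpos_Ints_nonpos)

lemma cont_bound:
  fixes f :: "real \<Rightarrow> real"
  assumes "continuous_on {a..b} f"
  shows "\<exists>M. \<forall>x\<in>{a..b}. \<bar>f x\<bar> \<le> M"
proof -
  have "bounded (f ` {a..b})" by (intro compact_imp_bounded compact_continuous_image assms) auto
  then show ?thesis by (auto simp: bounded_real)
qed

lemma alex_upper:
  assumes "\<forall>x\<in>{a..b}. \<bar>f x\<bar> \<le> M" "x \<in> {a..b}"
  shows "\<bar>f x\<bar> \<le> alex a b f"
  unfolding alex_def using assms by (intro cSUP_upper bdd_aboveI2[of _ _ M]) auto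

lemma alex_le:
  assumes "a \<le> b" "\<forall>x\<in>{a..b}. \<bar>f x\<bar> \<le> M"
  shows "alex a b f \<le> M"
  unfolding alex_def using assms by (intro cSUP_least) auto

lemma alex_nonneg:
  assumes "a \<le> b" "\<forall>x\<in>{a..b}. \<bar>f x\<bar> \<le> M"
  shows "0 \<le> alex a b f"
  using alex_upper[OF assms(2), of a] assms(1) by auto

lemma alex_cont_upper:
  assumes "continuous_on {a..b} f" "x \<in> {a..b}"
  shows "\<bar>f x\<bar> \<le> alex a b f"
  using cont_bound[OF assms(1)] alex_upper assms(2) by blast

lemma test_fun_ends: "test_fun a b \<phi> \<Longrightarrow> \<phi> b = 0 \<and> \<phi> a = 0"
  unfolding test_fun_def by force

lemma IBP_test:
  assumes ab: "a \<le> b" and t: "test_fun a b \<phi>" and u: "u absolutely_integrable_on {a..b}"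
  shows "integral {a..b} (\<lambda>y. integral {a..y} u * deriv \<phi> y) = - integral {a..b} (\<lambda>s. u s * \<phi> s)"
  by (rule IBP[OF ab u test_fun_deriv_has[OF t] test_fun_deriv_cont[OF t]]) (use test_fun_ends[OF t] in auto)

lemma prim_RF:
  assumes ab: "a < b" and F: "continuous_on {a..b} F"
  shows "hk_primitive a b (regular a b F) (\<lambda>x. integral {a..x} F)"
proof -
  have Fi: "F integrable_on {a..b}" by (rule integrable_continuous_interval[OF F])
  have Fai: "F absolutely_integrable_on {a..b}" by (rule absolutely_integrable_continuous_real[OF F])
  have "continuous_on {a..b} (\<lambda>x. integral {a..x} F)" by (rule indefinite_integral_continuous_1[OF Fi])
  moreover have "integral {a..a} F = 0" by (rule integral_unique) (rule has_integral_null_real, simp)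
  moreover have "distr_eq a b (Dd (regular a b (\<lambda>x. integral {a..x} F))) (regular a b F)"
    unfolding distr_eq_def Dd_def regular_def
    using IBP_test[OF less_imp_le[OF ab] _ Fai] by simp
  ultimately show ?thesis by (simp add: hk_primitive_def)
qed

lemma hk_prim_props:
  assumes ab: "a < b" and Q: "hk_primitive a b g Q"
  shows "continuous_on {a..b} (hk_prim a b g)" "hk_prim a b g a = 0"
    "\<And>x. x \<in> {a..b} \<Longrightarrow> hk_prim a b g x = Q x"
  using hk_prim_char[OF ab Q] by (auto simp: hk_primitive_def)

lemma rl_L1_KI: "rl_L1 a n g = (\<lambda>x. 1 / Gamma n * KI a n g x)"
  by (simp add: rl_L1_def[abs_def] KI_def)

lemma RLGE:
  assumes ab: "a < b" and Q: "hk_primitive a b g Q" and n: "n \<ge> 1" and x: "x \<in> {a..b}"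
  shows "rl_hk a b n g x = (if n = 1 then Q x else KI a (n - 1) Q x / Gamma (n - 1))"
proof -
  note P = hk_prim_props[OF ab Q]
  show ?thesis
  proof (cases "n = 1")
    case True
    then show ?thesis using P x by (simp add: rl_hk_def hk_int_ac_def kern_def kern'_def)
  next
    case False
    then have n1: "n > 1" using n by simp
    have e1: "integral {a..x} (\<lambda>t. hk_prim a b g t * kern' n x t) = - (n - 1) * KI a (n - 1) Q x"
    proof -
      have "integral {a..x} (\<lambda>t. hk_prim a b g t * kern' n x t)
          = integral {a..x} (\<lambda>t. - (n - 1) * ((x - t) powr (n - 1 - 1) * Q t))"
        using P(3) x False by (intro Henstock_Kurzweil_Integration.integral_cong) (auto simp: kern'_def)
      also have "\<dots> = - (n - 1) * KI a (n - 1) Q x" by (simp add: KI_def)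
      finally show ?thesis .
    qed
    have g: "Gamma n = (n - 1) * Gamma (n - 1)" using Gamma_rec[of "n - 1"] n1 by simp
    have gp: "Gamma (n - 1) > 0" using n1 by simp
    have hk: "hk_int_ac (hk_prim a b g) (kern n x) (kern' n x) a x = (n - 1) * KI a (n - 1) Q x"
      unfolding hk_int_ac_def kern_def using False P(2) e1 by (simp add: algebra_simps)
    have "rl_hk a b n g x = 1 / Gamma n * ((n - 1) * KI a (n - 1) Q x)"
      by (simp add: rl_hk_def hk)
    also have "\<dots> = KI a (n - 1) Q x / Gamma (n - 1)"
    proof -
      have gen: "\<And>c G K. c \<noteq> 0 \<Longrightarrow> G \<noteq> 0 \<Longrightarrow> 1 / (c * G) * (c * K) = K / (G::real)"
        by (simp add: field_simps)
      show ?thesis unfolding g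
      proof (rule gen)
        show "n - 1 \<noteq> 0" using n1 by simp
        show "Gamma (n - 1) \<noteq> 0" using gp by linarith
      qed
    qed
    finally show ?thesis using False by simp
  qed
qed

lemma RLLT:
  assumes ab: "a < b" and Q: "hk_primitive a b g Q" and n: "0 < n" "n < 1"
  shows "rl_lt1_prim a b n g = (\<lambda>x. if x \<in> {a..b} then KI a n Q x / Gamma n else 0)"
proof -
  note P = hk_prim_props[OF ab Q]
  define Pg where "Pg = hk_prim a b g"
  have Pc: "continuous_on {a..b} Pg" and Pa: "Pg a = 0" and PQ: "\<And>x. x \<in> {a..b} \<Longrightarrow> Pg x = Q x"
    using P by (auto simp: Pg_def)
  define G0 where "G0 = (\<lambda>x. if x \<in> {a..b} then KI a n Q x / Gamma n else 0)"
  define Prop where "Prop = (\<lambda>G. continuous_on {a..b} G \<and> G a = 0 \<and> (\<forall>x. x \<notin> {a..b} \<longrightarrow> G x = 0) \<and>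
     (\<forall>fk :: nat \<Rightarrow> real \<Rightarrow> real.
        (\<forall>k. fk k absolutely_integrable_on {a..b}) \<and>
        (\<lambda>k. alex a b (\<lambda>x. integral {a..x} (fk k) - hk_prim a b g x)) \<longlonglongrightarrow> 0
        \<longrightarrow> (\<lambda>k. alex a b (\<lambda>x. integral {a..x} (rl_L1 a n (fk k)) - G x)) \<longlonglongrightarrow> 0))"
  have Gp: "Gamma n > 0" using n by simp
  have KIPQ: "KI a n Pg x = KI a n Q x" if "x \<in> {a..b}" for x
    using that PQ by (intro KI_cong) auto
  have KIc: "continuous_on {a..b} (KI a n Pg)" by (rule KI_cont[OF n(1) less_imp_le[OF ab] Pc])
  have G0c: "continuous_on {a..b} G0"
  proof -
    have "continuous_on {a..b} (\<lambda>x. KI a n Pg x / Gamma n)" by (intro continuous_on_divide KIc continuous_on_const) (use Gp in auto)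
    moreover have "\<And>x. x \<in> {a..b} \<Longrightarrow> KI a n Pg x / Gamma n = G0 x" using KIPQ by (simp add: G0_def)
    ultimately show ?thesis by (rule continuous_on_eq)
  qed
  have key: "integral {a..x} (rl_L1 a n f) - G0 x = KI a n (\<lambda>s. integral {a..s} f - Pg s) x / Gamma n"
    if f: "f absolutely_integrable_on {a..b}" and x: "x \<in> {a..b}" for f x
  proof -
    have ax: "a \<le> x" using x by auto
    have fx: "f absolutely_integrable_on {a..x}"
      using absolutely_integrable_on_subinterval[OF f] x by auto
    have fi: "f integrable_on {a..x}" using fx by (simp add: set_lebesgue_integral_eq_integral(1))
    have "integral {a..x} (rl_L1 a n f) = integral {a..x} (KI a n f) / Gamma n"
      by (simp add: rl_L1_KI)
    also have "\<dots> = KI a n (\<lambda>s. integral {a..s} f) x / Gamma n" using LemA[OF n(1) ax fx] by simp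
    finally have e1: "integral {a..x} (rl_L1 a n f) = KI a n (\<lambda>s. integral {a..s} f) x / Gamma n" .
    have "KI a n (\<lambda>s. integral {a..s} f - Pg s) x = KI a n (\<lambda>s. integral {a..s} f) x - KI a n Pg x"
      by (intro KI_diff[OF n(1) ax] indefinite_integral_continuous_1 fi continuous_on_subset[OF Pc]) (use x in auto)
    then show ?thesis using e1 KIPQ[OF x] x by (simp add: G0_def diff_divide_distrib)
  qed
  have PropG0: "Prop G0"
    unfolding Prop_def
  proof (intro conjI allI impI)
    show "continuous_on {a..b} G0" by (rule G0c)
    show "G0 a = 0" using ab by (simp add: G0_def KI_at_a)
    show "\<And>x. x \<notin> {a..b} \<Longrightarrow> G0 x = 0" unfolding G0_def by presburger
    fix fk :: "nat \<Rightarrow> real \<Rightarrow> real"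
    assume h: "(\<forall>k. fk k absolutely_integrable_on {a..b}) \<and>
        (\<lambda>k. alex a b (\<lambda>x. integral {a..x} (fk k) - hk_prim a b g x)) \<longlonglongrightarrow> 0"
    define A where "A k = alex a b (\<lambda>x. integral {a..x} (fk k) - Pg x)" for k
    have A0: "A \<longlonglongrightarrow> 0" using h by (simp add: A_def[abs_def] Pg_def)
    define C where "C = (b - a) powr n / n / Gamma n"
    have C: "C \<ge> 0" using n Gp by (simp add: C_def)
    have Ec: "continuous_on {a..b} (\<lambda>x. integral {a..x} (fk k) - Pg x)" for k
      using h by (intro continuous_on_diff indefinite_integral_continuous_1 Pc)
        (auto simp: set_lebesgue_integral_eq_integral(1))
    have bound: "\<bar>integral {a..x} (rl_L1 a n (fk k)) - G0 x\<bar> \<le> A k * C" if x: "x \<in> {a..b}" for k x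
    proof -
      have ax: "a \<le> x" using x by auto
      have "\<bar>KI a n (\<lambda>s. integral {a..s} (fk k) - Pg s) x\<bar> \<le> A k * ((x - a) powr n / n)"
      proof (rule boundB[OF n(1) ax])
        show "continuous_on {a..x} (\<lambda>s. integral {a..s} (fk k) - Pg s)"
          by (rule continuous_on_subset[OF Ec]) (use x in auto)
        fix s assume "s \<in> {a..x}"
        then show "\<bar>integral {a..s} (fk k) - Pg s\<bar> \<le> A k"
          unfolding A_def using x by (intro alex_cont_upper[OF Ec]) auto
      qed
      also have "\<dots> \<le> A k * ((b - a) powr n / n)"
      proof (intro mult_left_mono divide_right_mono powr_mono2)
        show "0 \<le> A k" unfolding A_def using alex_cont_upper[OF Ec, of a k] ab by force
      qed (use x n in auto)
      finally have K: "\<bar>KI a n (\<lambda>s. integral {a..s} (fk k) - Pg s) x\<bar> \<le> A k * ((b - a) powr n / n)" .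
      have "\<bar>KI a n (\<lambda>s. integral {a..s} (fk k) - Pg s) x\<bar> / Gamma n \<le> A k * ((b - a) powr n / n) / Gamma n"
        using K Gp by (intro divide_right_mono) auto
      also have "\<dots> = A k * C" by (simp add: C_def)
      finally have "\<bar>KI a n (\<lambda>s. integral {a..s} (fk k) - Pg s) x / Gamma n\<bar> \<le> A k * C"
        using Gp by (simp add: abs_divide)
      then show ?thesis using key[OF _ x, of "fk k"] h by simp
    qed
    define D where "D k = alex a b (\<lambda>x. integral {a..x} (rl_L1 a n (fk k)) - G0 x)" for k
    have D: "0 \<le> D k \<and> D k \<le> A k * C" for k
    proof -
      have bb: "\<forall>x\<in>{a..b}. \<bar>integral {a..x} (rl_L1 a n (fk k)) - G0 x\<bar> \<le> A k * C"
        using bound by blast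
      show ?thesis unfolding D_def
        using alex_le[OF less_imp_le[OF ab] bb] alex_nonneg[OF less_imp_le[OF ab] bb] by simp
    qed
    show "(\<lambda>k. alex a b (\<lambda>x. integral {a..x} (rl_L1 a n (fk k)) - G0 x)) \<longlonglongrightarrow> 0"
    proof (rule tendsto_sandwich[of "\<lambda>k. 0" _ _ "\<lambda>k. A k * C"])
      show "\<forall>\<^sub>F k in sequentially. 0 \<le> alex a b (\<lambda>x. integral {a..x} (rl_L1 a n (fk k)) - G0 x)"
        using D by (simp add: D_def)
      show "\<forall>\<^sub>F k in sequentially. alex a b (\<lambda>x. integral {a..x} (rl_L1 a n (fk k)) - G0 x) \<le> A k * C"
        using D by (simp add: D_def)
      show "(\<lambda>k. A k * C) \<longlonglongrightarrow> 0" using tendsto_mult_left_zero[OF A0, of C] by simp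
    qed simp
  qed
  obtain p q where pq: "\<And>k x. (p k has_real_derivative q k x) (at x)" "\<And>k. continuous_on UNIV (q k)"
      "\<And>k x. x \<in> {a..b} \<Longrightarrow> \<bar>Pg x - p k x\<bar> \<le> 1 / Suc k"
    using weierstrass_seq[OF Pc] by metis
  have qai: "q k absolutely_integrable_on {a..b}" for k
    by (intro absolutely_integrable_continuous_real continuous_on_subset[OF pq(2)]) auto
  have qconv: "(\<lambda>k. alex a b (\<lambda>x. integral {a..x} (q k) - hk_prim a b g x)) \<longlonglongrightarrow> 0"
  proof (rule tendsto_sandwich[of "\<lambda>k. 0" _ _ "\<lambda>k. 2 / Suc k"])
    have b: "\<forall>x\<in>{a..b}. \<bar>integral {a..x} (q k) - hk_prim a b g x\<bar> \<le> 2 / Suc k" for k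
    proof
      fix x assume x: "x \<in> {a..b}"
      have "integral {a..x} (q k) = p k x - p k a" using x by (intro ftc_int pq(1)) auto
      moreover have "\<bar>Pg x - p k x\<bar> \<le> 1 / Suc k" "\<bar>Pg a - p k a\<bar> \<le> 1 / Suc k"
        using pq(3) x ab by auto
      ultimately show "\<bar>integral {a..x} (q k) - hk_prim a b g x\<bar> \<le> 2 / Suc k"
        using Pa by (simp add: Pg_def)
    qed
    show "\<forall>\<^sub>F k in sequentially. 0 \<le> alex a b (\<lambda>x. integral {a..x} (q k) - hk_prim a b g x)"
      using alex_nonneg[OF less_imp_le[OF ab] b] by simp
    show "\<forall>\<^sub>F k in sequentially. alex a b (\<lambda>x. integral {a..x} (q k) - hk_prim a b g x) \<le> 2 / Suc k"
      using alex_le[OF less_imp_le[OF ab] b] by simp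
    have "(\<lambda>k. 2 * (1 / real (Suc k))) \<longlonglongrightarrow> 2 * 0"
      by (intro tendsto_mult tendsto_const LIMSEQ_Suc[OF lim_1_over_n])
    then show "(\<lambda>k. 2 / real (Suc k)) \<longlonglongrightarrow> 0" by simp
  qed simp
  have uniq: "G = G0" if PG: "Prop G" for G
  proof
    fix x show "G x = G0 x"
    proof (cases "x \<in> {a..b}")
      case False then show ?thesis using PG PropG0 by (simp add: Prop_def)
    next
      case x: True
      have Gc: "continuous_on {a..b} G" using PG by (simp add: Prop_def)
      have lim: "(\<lambda>k. alex a b (\<lambda>x. integral {a..x} (rl_L1 a n (q k)) - H x)) \<longlonglongrightarrow> 0"
        if "Prop H" for H
        using that qai qconv unfolding Prop_def by blast
      have Rc: "continuous_on {a..b} (\<lambda>x. integral {a..x} (rl_L1 a n (q k)))" for k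
      proof -
        have "KI a n (q k) absolutely_integrable_on {a..b}"
          by (rule FubA1(2)[OF n(1) less_imp_le[OF ab] qai])
        then have "(\<lambda>x. 1 / Gamma n * KI a n (q k) x) integrable_on {a..b}"
          by (intro integrable_on_mult_right) (simp add: set_lebesgue_integral_eq_integral(1))
        then show ?thesis unfolding rl_L1_KI by (rule indefinite_integral_continuous_1)
      qed
      have le: "\<bar>G x - G0 x\<bar> \<le> alex a b (\<lambda>x. integral {a..x} (rl_L1 a n (q k)) - G x)
          + alex a b (\<lambda>x. integral {a..x} (rl_L1 a n (q k)) - G0 x)" for k
      proof -
        have "\<bar>integral {a..x} (rl_L1 a n (q k)) - G x\<bar> \<le> alex a b (\<lambda>x. integral {a..x} (rl_L1 a n (q k)) - G x)"
          by (intro alex_cont_upper continuous_on_diff Rc Gc x)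
        moreover have "\<bar>integral {a..x} (rl_L1 a n (q k)) - G0 x\<bar> \<le> alex a b (\<lambda>x. integral {a..x} (rl_L1 a n (q k)) - G0 x)"
          by (intro alex_cont_upper continuous_on_diff Rc G0c x)
        ultimately show ?thesis by linarith
      qed
      have "(\<lambda>k. alex a b (\<lambda>x. integral {a..x} (rl_L1 a n (q k)) - G x)
          + alex a b (\<lambda>x. integral {a..x} (rl_L1 a n (q k)) - G0 x)) \<longlonglongrightarrow> 0 + 0"
        by (intro tendsto_add lim PG PropG0)
      then have "(\<lambda>k. alex a b (\<lambda>x. integral {a..x} (rl_L1 a n (q k)) - G x)
          + alex a b (\<lambda>x. integral {a..x} (rl_L1 a n (q k)) - G0 x)) \<longlonglongrightarrow> 0" by simp
      then have "\<bar>G x - G0 x\<bar> \<le> 0"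
        by (rule tendsto_lowerbound) (use le in auto)
      then show ?thesis by simp
    qed
  qed
  have "rl_lt1_prim a b n g = G0"
    unfolding rl_lt1_prim_def
  proof (rule the_equality)
    show "continuous_on {a..b} G0 \<and> G0 a = 0 \<and> (\<forall>x. x \<notin> {a..b} \<longrightarrow> G0 x = 0) \<and>
     (\<forall>fk :: nat \<Rightarrow> real \<Rightarrow> real.
        (\<forall>k. fk k absolutely_integrable_on {a..b}) \<and>
        (\<lambda>k. alex a b (\<lambda>x. integral {a..x} (fk k) - hk_prim a b g x)) \<longlonglongrightarrow> 0
        \<longrightarrow> (\<lambda>k. alex a b (\<lambda>x. integral {a..x} (rl_L1 a n (fk k)) - G0 x)) \<longlonglongrightarrow> 0)"
      using PropG0 by (simp add: Prop_def)
    fix G assume "continuous_on {a..b} G \<and> G a = 0 \<and> (\<forall>x. x \<notin> {a..b} \<longrightarrow> G x = 0) \<and>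
     (\<forall>fk :: nat \<Rightarrow> real \<Rightarrow> real.
        (\<forall>k. fk k absolutely_integrable_on {a..b}) \<and>
        (\<lambda>k. alex a b (\<lambda>x. integral {a..x} (fk k) - hk_prim a b g x)) \<longlonglongrightarrow> 0
        \<longrightarrow> (\<lambda>k. alex a b (\<lambda>x. integral {a..x} (rl_L1 a n (fk k)) - G x)) \<longlonglongrightarrow> 0)"
    then show "G = G0" by (intro uniq) (simp add: Prop_def)
  qed
  then show ?thesis by (simp add: G0_def)
qed



lemma DPOW: "Dpow j T \<phi> = (-1) ^ j * T ((deriv ^^ j) \<phi>)"
proof (induction j arbitrary: \<phi>)
  case 0 then show ?case by (simp add: Dpow_def)
next
  case (Suc j)
  have "Dpow (Suc j) T \<phi> = Dd (Dpow j T) \<phi>" by (simp add: Dpow_def)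
  also have "\<dots> = - Dpow j T (deriv \<phi>)" by (simp add: Dd_def)
  also have "\<dots> = - ((-1) ^ j * T ((deriv ^^ j) (deriv \<phi>)))" by (simp add: Suc.IH)
  also have "(deriv ^^ j) (deriv \<phi>) = (deriv ^^ Suc j) \<phi>" by (simp add: funpow_Suc_right del: funpow.simps)
  finally show ?case by simp
qed

lemma claim1:
  assumes ab: "a < b" and \<nu>: "\<nu> \<ge> 0" and F: "hk_primitive a b f F" and t: "test_fun a b \<phi>"
  shows "RL_int a b \<nu> f \<phi> = Dd (RL_int a b \<nu> (regular a b F)) \<phi>"
proof -
  have Fc: "continuous_on {a..b} F" and Fa: "F a = 0" and Fd: "distr_eq a b (Dd (regular a b F)) f"
    using F by (auto simp: hk_primitive_def)
  have Fai: "F absolutely_integrable_on {a..b}" by (rule absolutely_integrable_continuous_real[OF Fc])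
  have Faix: "F absolutely_integrable_on {a..x}" if "x \<in> {a..b}" for x
    using absolutely_integrable_on_subinterval[OF Fai] that by auto
  define G where "G = (\<lambda>x. integral {a..x} F)"
  have GP: "hk_primitive a b (regular a b F) G" unfolding G_def by (rule prim_RF[OF ab Fc])
  have t1: "test_fun a b (deriv \<phi>)" by (rule test_fun_deriv[OF t])
  have abl: "a \<le> b" using ab by simp
  consider "\<nu> = 0" | "0 < \<nu>" "\<nu> < 1" | "\<nu> = 1" | "\<nu> > 1" using \<nu> by linarith
  then show ?thesis
  proof cases
    case 1
    then show ?thesis using Fd t by (simp add: RL_int_def distr_eq_def)
  next
    case 2
    note L1 = RLLT[OF ab F 2] and L2 = RLLT[OF ab GP 2]
    define \<Gamma> where "\<Gamma> = Gamma \<nu>"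
    define u where "u = KI a \<nu> F"
    have uai: "u absolutely_integrable_on {a..b}" unfolding u_def by (rule FubA1(2)[OF 2(1) abl Fai])
    have "RL_int a b \<nu> f \<phi> = - integral {a..b} (\<lambda>x. rl_lt1_prim a b \<nu> f x * deriv \<phi> x)"
      using 2 by (simp add: RL_int_def Dd_def regular_def)
    also have "\<dots> = - integral {a..b} (\<lambda>x. 1 / \<Gamma> * (u x * deriv \<phi> x))"
      unfolding L1 u_def \<Gamma>_def by (intro arg_cong[where f=uminus] Henstock_Kurzweil_Integration.integral_cong) auto
    finally have lhs: "RL_int a b \<nu> f \<phi> = - (1 / \<Gamma> * integral {a..b} (\<lambda>x. u x * deriv \<phi> x))" by simp
    have "Dd (RL_int a b \<nu> (regular a b F)) \<phi> = integral {a..b} (\<lambda>x. rl_lt1_prim a b \<nu> (regular a b F) x * deriv (deriv \<phi>) x)"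
      using 2 by (simp add: RL_int_def Dd_def regular_def)
    also have "\<dots> = integral {a..b} (\<lambda>x. 1 / \<Gamma> * (integral {a..x} u * deriv (deriv \<phi>) x))"
    proof (intro Henstock_Kurzweil_Integration.integral_cong)
      fix x assume x: "x \<in> {a..b}"
      have "KI a \<nu> G x = integral {a..x} u"
        unfolding G_def u_def using x by (intro LemA[OF 2(1) _ Faix[OF x]]) auto
      then show "rl_lt1_prim a b \<nu> (regular a b F) x * deriv (deriv \<phi>) x = 1 / \<Gamma> * (integral {a..x} u * deriv (deriv \<phi>) x)"
        unfolding L2 \<Gamma>_def using x by simp
    qed
    also have "\<dots> = 1 / \<Gamma> * integral {a..b} (\<lambda>x. integral {a..x} u * deriv (deriv \<phi>) x)" by simp
    also have "integral {a..b} (\<lambda>x. integral {a..x} u * deriv (deriv \<phi>) x) = - integral {a..b} (\<lambda>x. u x * deriv \<phi> x)"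
      by (rule IBP_test[OF abl t1 uai])
    finally show ?thesis using lhs by simp
  next
    case 3
    have "RL_int a b \<nu> f \<phi> = integral {a..b} (\<lambda>x. rl_hk a b \<nu> f x * \<phi> x)"
      using 3 by (simp add: RL_int_def regular_def)
    also have "\<dots> = integral {a..b} (\<lambda>x. F x * \<phi> x)"
      using RLGE[OF ab F] 3 by (intro Henstock_Kurzweil_Integration.integral_cong) auto
    finally have lhs: "RL_int a b \<nu> f \<phi> = integral {a..b} (\<lambda>x. F x * \<phi> x)" .
    have "Dd (RL_int a b \<nu> (regular a b F)) \<phi> = - integral {a..b} (\<lambda>x. rl_hk a b \<nu> (regular a b F) x * deriv \<phi> x)"
      using 3 by (simp add: RL_int_def Dd_def regular_def)
    also have "\<dots> = - integral {a..b} (\<lambda>x. integral {a..x} F * deriv \<phi> x)"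
      using RLGE[OF ab GP] 3 unfolding G_def by (intro arg_cong[where f=uminus] Henstock_Kurzweil_Integration.integral_cong) auto
    also have "\<dots> = integral {a..b} (\<lambda>x. F x * \<phi> x)" using IBP_test[OF abl t Fai] by simp
    finally show ?thesis using lhs by simp
  next
    case 4
    define \<Gamma> where "\<Gamma> = Gamma (\<nu> - 1)"
    have \<nu>1: "\<nu> - 1 > 0" using 4 by simp
    define u where "u = KI a (\<nu> - 1) F"
    have uai: "u absolutely_integrable_on {a..b}" unfolding u_def by (rule FubA1(2)[OF \<nu>1 abl Fai])
    have "RL_int a b \<nu> f \<phi> = integral {a..b} (\<lambda>x. rl_hk a b \<nu> f x * \<phi> x)"
      using 4 by (simp add: RL_int_def regular_def)
    also have "\<dots> = integral {a..b} (\<lambda>x. 1 / \<Gamma> * (u x * \<phi> x))"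
      using RLGE[OF ab F] 4 unfolding u_def \<Gamma>_def by (intro Henstock_Kurzweil_Integration.integral_cong) auto
    finally have lhs: "RL_int a b \<nu> f \<phi> = 1 / \<Gamma> * integral {a..b} (\<lambda>x. u x * \<phi> x)" by simp
    have "Dd (RL_int a b \<nu> (regular a b F)) \<phi> = - integral {a..b} (\<lambda>x. rl_hk a b \<nu> (regular a b F) x * deriv \<phi> x)"
      using 4 by (simp add: RL_int_def Dd_def regular_def)
    also have "\<dots> = - integral {a..b} (\<lambda>x. 1 / \<Gamma> * (integral {a..x} u * deriv \<phi> x))"
    proof (intro arg_cong[where f=uminus] Henstock_Kurzweil_Integration.integral_cong)
      fix x assume x: "x \<in> {a..b}"
      have "KI a (\<nu> - 1) G x = integral {a..x} u"
        unfolding G_def u_def using x by (intro LemA[OF \<nu>1 _ Faix[OF x]]) auto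
      then show "rl_hk a b \<nu> (regular a b F) x * deriv \<phi> x = 1 / \<Gamma> * (integral {a..x} u * deriv \<phi> x)"
        using RLGE[OF ab GP _ x] 4 unfolding \<Gamma>_def by simp
    qed
    also have "\<dots> = - (1 / \<Gamma> * integral {a..b} (\<lambda>x. integral {a..x} u * deriv \<phi> x))" by simp
    also have "integral {a..b} (\<lambda>x. integral {a..x} u * deriv \<phi> x) = - integral {a..b} (\<lambda>x. u x * \<phi> x)"
      by (rule IBP_test[OF abl t uai])
    finally show ?thesis using lhs by simp
  qed
qed

lemma deriv_lin:
  assumes "smooth_fun \<phi>" "smooth_fun \<psi>"
  shows "(deriv ^^ k) (\<lambda>x. \<alpha> * \<phi> x + \<beta> * \<psi> x) = (\<lambda>x. \<alpha> * (deriv ^^ k) \<phi> x + \<beta> * (deriv ^^ k) \<psi> x)"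
proof (induction k)
  case 0 then show ?case by simp
next
  case (Suc k)
  have d1: "((deriv ^^ k) \<phi> has_real_derivative (deriv ^^ Suc k) \<phi> x) (at x)" for x
    using assms(1) by (simp add: smooth_fun_def del: funpow.simps)
  have d2: "((deriv ^^ k) \<psi> has_real_derivative (deriv ^^ Suc k) \<psi> x) (at x)" for x
    using assms(2) by (simp add: smooth_fun_def del: funpow.simps)
  have "(deriv ^^ Suc k) (\<lambda>x. \<alpha> * \<phi> x + \<beta> * \<psi> x) = deriv ((deriv ^^ k) (\<lambda>x. \<alpha> * \<phi> x + \<beta> * \<psi> x))" by simp
  also have "\<dots> = deriv (\<lambda>x. \<alpha> * (deriv ^^ k) \<phi> x + \<beta> * (deriv ^^ k) \<psi> x)" by (simp add: Suc.IH)
  also have "\<dots> = (\<lambda>x. \<alpha> * (deriv ^^ Suc k) \<phi> x + \<beta> * (deriv ^^ Suc k) \<psi> x)"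
    by (intro ext DERIV_imp_deriv DERIV_add DERIV_cmult d1 d2)
  finally show ?case .
qed

lemma deriv2: "(deriv ^^ 2) \<phi> = deriv (deriv \<phi>)" by (simp add: numeral_2_eq_2)

lemma test_bdd:
  assumes t: "test_fun a b \<phi>"
  shows "bdd_above (range (\<lambda>x. \<bar>(deriv ^^ j) \<phi> x\<bar>))"
proof -
  have tj: "test_fun a b ((deriv ^^ j) \<phi>)" by (rule test_fun_derivs[OF t])
  then obtain c d where cd: "\<And>x. x \<notin> {c..d} \<Longrightarrow> (deriv ^^ j) \<phi> x = 0"
    by (auto simp: test_fun_def)
  obtain M where M: "\<forall>x\<in>{c..d}. \<bar>(deriv ^^ j) \<phi> x\<bar> \<le> M"
    using cont_bound[OF test_fun_cont[OF tj]] by blast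
  have "\<bar>(deriv ^^ j) \<phi> x\<bar> \<le> max M 0" for x
  proof (cases "x \<in> {c..d}")
    case True
    then have "\<bar>(deriv ^^ j) \<phi> x\<bar> \<le> M" using M by blast
    then show ?thesis by linarith
  next
    case False
    then show ?thesis using cd[of x] by simp
  qed
  then show ?thesis by (intro bdd_aboveI2) 
qed

lemma sup_upper: fixes f :: "real \<Rightarrow> real" shows "bdd_above (range (\<lambda>x. \<bar>f x\<bar>)) \<Longrightarrow> \<bar>f y\<bar> \<le> (SUP x. \<bar>f x\<bar>)"
  by (rule cSUP_upper) auto

lemma sup_nonneg: fixes f :: "real \<Rightarrow> real" shows "bdd_above (range (\<lambda>x. \<bar>f x\<bar>)) \<Longrightarrow> 0 \<le> (SUP x. \<bar>f x :: real\<bar>)"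
  using sup_upper[of f 0] by linarith

theorem theorem4p4:
  fixes a b n :: real and f :: distr and F :: "real \<Rightarrow> real"
  assumes "a < b" and "n \<ge> 0"
    and "is_distribution a b f" and "HK_integrable a b f"
    and "hk_primitive a b f F"
  shows "distr_eq a b (RL_int a b n f) (Dd (RL_int a b n (regular a b F)))
    \<and> (\<forall>(j::nat) \<phi>. test_fun a b \<phi> \<longrightarrow>
         Dpow j (RL_int a b n f) \<phi>
           = (-1) ^ (j + 1) * RL_int a b n (regular a b F) ((deriv ^^ (j + 1)) \<phi>))
    \<and> distr_eq a b (RL_der a b n f)
        (Dpow (nat \<lceil>n\<rceil> + 1) (RL_int a b (real (nat \<lceil>n\<rceil>) - n) (regular a b F)))
    \<and> (0 < n \<and> n < 1 \<longrightarrow>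
         temperate_on a b (RL_der a b n (regular a b F))
         \<and> distr_eq a b (RL_der a b n (regular a b F)) (RL_int a b (1 - n) f))"
proof -
  note ab = assms(1) and n0 = assms(2) and F = assms(5)
  define RF where "RF = regular a b F"
  have c1: "\<And>\<nu> \<phi>. \<nu> \<ge> 0 \<Longrightarrow> test_fun a b \<phi> \<Longrightarrow> RL_int a b \<nu> f \<phi> = - RL_int a b \<nu> RF (deriv \<phi>)"
    using claim1[OF ab _ F] by (simp add: Dd_def RF_def)
  have P1: "distr_eq a b (RL_int a b n f) (Dd (RL_int a b n RF))"
    unfolding distr_eq_def Dd_def using c1[OF n0] by simp
  have P2: "\<forall>(j::nat) \<phi>. test_fun a b \<phi> \<longrightarrow>
         Dpow j (RL_int a b n f) \<phi> = (-1) ^ (j + 1) * RL_int a b n RF ((deriv ^^ (j + 1)) \<phi>)"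
  proof (intro allI impI)
    fix j :: nat and \<phi> assume t: "test_fun a b \<phi>"
    have "Dpow j (RL_int a b n f) \<phi> = (-1) ^ j * RL_int a b n f ((deriv ^^ j) \<phi>)" by (rule DPOW)
    also have "\<dots> = (-1) ^ j * (- RL_int a b n RF (deriv ((deriv ^^ j) \<phi>)))"
      using c1[OF n0 test_fun_derivs[OF t]] by simp
    finally show "Dpow j (RL_int a b n f) \<phi> = (-1) ^ (j + 1) * RL_int a b n RF ((deriv ^^ (j + 1)) \<phi>)"
      by simp
  qed
  define m where "m = nat \<lceil>n\<rceil>"
  have \<nu>0: "real m - n \<ge> 0" unfolding m_def using n0 by linarith
  have P3: "distr_eq a b (RL_der a b n f) (Dpow (m + 1) (RL_int a b (real m - n) RF))"
    unfolding distr_eq_def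
  proof (intro allI impI)
    fix \<phi> assume t: "test_fun a b \<phi>"
    have "RL_der a b n f \<phi> = (-1) ^ m * RL_int a b (real m - n) f ((deriv ^^ m) \<phi>)"
      by (simp add: RL_der_def m_def DPOW)
    also have "\<dots> = (-1) ^ m * (- RL_int a b (real m - n) RF (deriv ((deriv ^^ m) \<phi>)))"
      using c1[OF \<nu>0 test_fun_derivs[OF t]] by simp
    also have "\<dots> = Dpow (m + 1) (RL_int a b (real m - n) RF) \<phi>" by (simp add: DPOW)
    finally show "RL_der a b n f \<phi> = Dpow (m + 1) (RL_int a b (real m - n) RF) \<phi>" .
  qed
  have P4: "temperate_on a b (RL_der a b n RF) \<and> distr_eq a b (RL_der a b n RF) (RL_int a b (1 - n) f)"
    if n01: "0 < n" "n < 1"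
  proof -
    have "\<lceil>n\<rceil> = 1" by (rule ceiling_unique) (use n01 in auto)
    then have m1: "m = 1" unfolding m_def by simp
    have RD: "RL_der a b n RF = Dd (RL_int a b (1 - n) RF)"
      using m1 by (simp add: RL_der_def m_def[symmetric] Dpow_def)
    have dq: "distr_eq a b (RL_der a b n RF) (RL_int a b (1 - n) f)"
      unfolding distr_eq_def RD using c1[of "1 - n"] n01 by (simp add: Dd_def)
    define H where "H = rl_lt1_prim a b (1 - n) RF"
    have GP: "hk_primitive a b RF (\<lambda>x. integral {a..x} F)"
      unfolding RF_def by (rule prim_RF[OF ab]) (use F in \<open>simp add: hk_primitive_def\<close>)
    have Fc: "continuous_on {a..b} F" using F by (simp add: hk_primitive_def)
    have gnz: "Gamma (1 - n) \<noteq> 0" using n01 Gamma_real_pos[of "1 - n"] by linarith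
    have Hc: "continuous_on {a..b} H"
    proof -
      have "continuous_on {a..b} (KI a (1 - n) (\<lambda>x. integral {a..x} F))"
        using n01 ab by (intro KI_cont indefinite_integral_continuous_1 integrable_continuous_interval Fc) auto
      then have "continuous_on {a..b} (\<lambda>x. KI a (1 - n) (\<lambda>x. integral {a..x} F) x / Gamma (1 - n))"
        by (intro continuous_on_divide continuous_on_const) (use gnz in auto)
      then show ?thesis unfolding H_def
        by (rule continuous_on_eq) (use RLLT[OF ab GP, of "1 - n"] n01 gnz in auto)
    qed
    obtain MH where MH: "\<forall>x\<in>{a..b}. \<bar>H x\<bar> \<le> MH" using cont_bound[OF Hc] by blast
    have MH0: "0 \<le> MH" using MH ab by (meson abs_ge_zero atLeastAtMost_iff less_imp_le order_trans order_refl)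
    have Teq: "RL_der a b n RF \<phi> = integral {a..b} (\<lambda>x. H x * deriv (deriv \<phi>) x)" for \<phi>
      unfolding RD using n01 by (simp add: RL_int_def Dd_def regular_def H_def)
    have Tint: "(\<lambda>x. H x * deriv (deriv \<phi>) x) integrable_on {a..b}" if s: "smooth_fun \<phi>" for \<phi>
    proof -
      have "Ck 3 \<phi>" using s by (simp add: smooth_fun_Ck)
      then have "Ck (Suc 0) (deriv (deriv \<phi>))" by (simp add: numeral_3_eq_3)
      then have "continuous_on {a..b} (deriv (deriv \<phi>))" by (rule Ck_continuous)
      then show ?thesis by (intro integrable_continuous_interval continuous_on_mult Hc)
    qed
    have lin: "RL_der a b n RF (\<lambda>x. \<alpha> * \<phi> x + \<beta> * \<psi> x) = \<alpha> * RL_der a b n RF \<phi> + \<beta> * RL_der a b n RF \<psi>"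
      if s: "smooth_fun \<phi>" "smooth_fun \<psi>" for \<phi> \<psi> \<alpha> \<beta>
    proof -
      have dd: "deriv (deriv (\<lambda>x. \<alpha> * \<phi> x + \<beta> * \<psi> x)) = (\<lambda>x. \<alpha> * deriv (deriv \<phi>) x + \<beta> * deriv (deriv \<psi>) x)"
        using deriv_lin[OF s, of 2 \<alpha> \<beta>] by (simp add: deriv2)
      have "integral {a..b} (\<lambda>x. H x * (\<alpha> * deriv (deriv \<phi>) x + \<beta> * deriv (deriv \<psi>) x))
          = integral {a..b} (\<lambda>x. \<alpha> * (H x * deriv (deriv \<phi>) x) + \<beta> * (H x * deriv (deriv \<psi>) x))"
        by (simp add: algebra_simps)
      also have "\<dots> = \<alpha> * integral {a..b} (\<lambda>x. H x * deriv (deriv \<phi>) x) + \<beta> * integral {a..b} (\<lambda>x. H x * deriv (deriv \<psi>) x)"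
        using Tint[OF s(1)] Tint[OF s(2)]
        by (subst integral_add) (auto intro: integrable_on_mult_right)
      finally show ?thesis unfolding Teq dd .
    qed
    have bnd: "\<bar>RL_der a b n RF \<phi>\<bar> \<le> (MH * (b - a)) * B"
      if s: "smooth_fun \<phi>" and B: "\<And>x. \<bar>deriv (deriv \<phi>) x\<bar> \<le> B" for \<phi> B
    proof -
      have "norm (integral {a..b} (\<lambda>x. H x * deriv (deriv \<phi>) x)) \<le> integral {a..b} (\<lambda>x. MH * B)"
      proof (rule Henstock_Kurzweil_Integration.integral_norm_bound_integral[OF Tint[OF s]])
        show "(\<lambda>x. MH * B) integrable_on {a..b}" by (rule integrable_const_ivl)
        fix x assume x: "x \<in> {a..b}"
        show "norm (H x * deriv (deriv \<phi>) x) \<le> MH * B"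
          using MH x B[of x] by (simp add: abs_mult mult_mono')
      qed
      then show ?thesis unfolding Teq using ab by (simp add: mult_ac)
    qed
    have isd: "is_distribution a b (RL_der a b n RF)"
      unfolding is_distribution_def
    proof (intro conjI allI impI)
      fix \<phi> \<psi> \<alpha> \<beta> assume "test_fun a b \<phi> \<and> test_fun a b \<psi>"
      then show "RL_der a b n RF (\<lambda>x. \<alpha> * \<phi> x + \<beta> * \<psi> x) = \<alpha> * RL_der a b n RF \<phi> + \<beta> * RL_der a b n RF \<psi>"
        by (intro lin) (auto simp: test_fun_def)
    next
      fix c d :: real assume "a < c \<and> d < b"
      show "\<exists>C N. \<forall>\<phi>. test_fun a b \<phi> \<and> (\<forall>x. x \<notin> {c..d} \<longrightarrow> \<phi> x = 0) \<longrightarrow>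
        \<bar>RL_der a b n RF \<phi>\<bar> \<le> C * (\<Sum>j\<le>N. (SUP x. \<bar>(deriv ^^ j) \<phi> x\<bar>))"
      proof (intro exI[of _ "MH * (b - a)"] exI[of _ "2::nat"] allI impI)
        fix \<phi> assume h: "test_fun a b \<phi> \<and> (\<forall>x. x \<notin> {c..d} \<longrightarrow> \<phi> x = 0)"
        then have t: "test_fun a b \<phi>" by simp
        have bd: "bdd_above (range (\<lambda>x. \<bar>(deriv ^^ j) \<phi> x\<bar>))" for j by (rule test_bdd[OF t])
        have "\<bar>RL_der a b n RF \<phi>\<bar> \<le> (MH * (b - a)) * (SUP x. \<bar>(deriv ^^ 2) \<phi> x\<bar>)"
          using t by (intro bnd) (auto simp: test_fun_def deriv2[symmetric] intro: sup_upper[OF bd])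
        also have "(SUP x. \<bar>(deriv ^^ 2) \<phi> x\<bar>) \<le> (\<Sum>j\<le>2. (SUP x. \<bar>(deriv ^^ j) \<phi> x\<bar>))"
          by (rule member_le_sum) (auto intro: sup_nonneg[OF bd])
        finally show "\<bar>RL_der a b n RF \<phi>\<bar> \<le> MH * (b - a) * (\<Sum>j\<le>2. (SUP x. \<bar>(deriv ^^ j) \<phi> x\<bar>))"
          using MH0 ab by (smt (verit) mult_left_mono mult_nonneg_nonneg)
      qed
    qed
    have tmp: "tempered (RL_der a b n RF)"
      unfolding tempered_def
    proof (intro conjI allI impI)
      fix \<phi> \<psi> \<alpha> \<beta> assume "schwartz_fun \<phi> \<and> schwartz_fun \<psi>"
      then show "RL_der a b n RF (\<lambda>x. \<alpha> * \<phi> x + \<beta> * \<psi> x) = \<alpha> * RL_der a b n RF \<phi> + \<beta> * RL_der a b n RF \<psi>"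
        by (intro lin) (auto simp: schwartz_fun_def)
    next
      show "\<exists>C N. \<forall>\<phi>. schwartz_fun \<phi> \<longrightarrow>
        \<bar>RL_der a b n RF \<phi>\<bar> \<le> C * (\<Sum>j\<le>N. \<Sum>k\<le>N. (SUP x. \<bar>x ^ k * (deriv ^^ j) \<phi> x\<bar>))"
      proof (intro exI[of _ "MH * (b - a)"] exI[of _ "2::nat"] allI impI)
        fix \<phi> assume s: "schwartz_fun \<phi>"
        have bd: "bdd_above (range (\<lambda>x. \<bar>x ^ k * (deriv ^^ j) \<phi> x\<bar>))" for j k
        proof -
          have "bounded (range (\<lambda>x. x ^ k * (deriv ^^ j) \<phi> x))" using s by (simp add: schwartz_fun_def)
          then obtain B where "\<forall>y\<in>range (\<lambda>x. x ^ k * (deriv ^^ j) \<phi> x). norm y \<le> B"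
            by (auto simp: bounded_iff)
          then show ?thesis by (intro bdd_aboveI2[of _ _ B]) auto
        qed
        have bd0: "bdd_above (range (\<lambda>x. \<bar>(deriv ^^ 2) \<phi> x\<bar>))" using bd[of 0 2] by simp
        have "\<bar>RL_der a b n RF \<phi>\<bar> \<le> (MH * (b - a)) * (SUP x. \<bar>(deriv ^^ 2) \<phi> x\<bar>)"
          using s by (intro bnd) (auto simp: schwartz_fun_def deriv2[symmetric] intro: sup_upper[OF bd0])
        also have "(SUP x. \<bar>(deriv ^^ 2) \<phi> x\<bar>) = (SUP x. \<bar>x ^ 0 * (deriv ^^ 2) \<phi> x\<bar>)" by simp
        also have "\<dots> \<le> (\<Sum>k\<le>2. (SUP x. \<bar>x ^ k * (deriv ^^ 2) \<phi> x\<bar>))"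
          by (rule member_le_sum) (auto intro: sup_nonneg[OF bd])
        also have "\<dots> \<le> (\<Sum>j\<le>2. \<Sum>k\<le>2. (SUP x. \<bar>x ^ k * (deriv ^^ j) \<phi> x\<bar>))"
          by (rule member_le_sum[of 2 "{..2}" "\<lambda>j. \<Sum>k\<le>2. (SUP x. \<bar>x ^ k * (deriv ^^ j) \<phi> x\<bar>)"])
             (auto intro!: sum_nonneg intro: sup_nonneg[OF bd])
        finally show "\<bar>RL_der a b n RF \<phi>\<bar> \<le> MH * (b - a) * (\<Sum>j\<le>2. \<Sum>k\<le>2. (SUP x. \<bar>x ^ k * (deriv ^^ j) \<phi> x\<bar>))"
          using MH0 ab by (smt (verit) mult_left_mono mult_nonneg_nonneg)
      qed
    qed
    have "temperate_on a b (RL_der a b n RF)"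
      unfolding temperate_on_def using isd tmp by blast
    then show ?thesis using dq by simp
  qed
  show ?thesis using P1 P2 P3 P4 by (simp add: RF_def m_def)
qed

end
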